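(* Let $\overline H_{\beta,q}\in(\widehat\Lambda^\hbar_N)^{[\le0]}$, $1\le\beta\le N$, $q\ge0$, be pairwise commuting quantum local functionals, $[\overline H_{\beta,q},\overline H_{\gamma,p}]=0$, with $\overline H_{1,0}=\int\frac12\eta_{\mu\nu}u^\mu u^\nu dx$. Suppose that $$\frac{\partial\overline H_{\beta,q}}{\partial u^1}=\begin{cases}\overline H_{\beta,q-1},&q\ge1,\\ \int\eta_{\beta\mu}u^\mu dx,&q=0.\end{cases}$$ Then the quantum differential polynomials $H_{\beta,q}:=\frac{\delta\overline H_{\beta,q+1}}{\delta u^1}$, $q\ge-1$, define a tau-structure for this quantum hierarchy.
   Context: Quantum differential polynomials $\widehat{\mathcal A}^\hbar_N$: formal power series in $\varepsilon,\hbar$ whose coefficients are polynomials in the formal variables $u^\alpha_k$ ($1\le\alpha\le N$, $k>0$) with coefficients in $\mathbb C[[u^1,\dots,u^N]]$ ($u^\alpha=u^\alpha_0$); grading $\deg u^\alpha_k=k$, $\deg\varepsilon=-1$, $\deg\hbar=-2$; superscript $[\le0]$ means sums of homogeneous terms of degree $\le0$. $\partial_x=\sum_ku^\alpha_{k+1}\partial/\partial u^\alpha_k$. Quantum local functionals $\widehat\Lambda^\hbar_N$: quotient of $\widehat{\mathcal A}^\hbar_N$ by power series in $\varepsilon,\hbar$ and by $\mathrm{Im}\,\partial_x$; $\int f\,dx$ denotes the class. $\frac{\delta\overline f}{\delta u^\mu}=\sum_i(-\partial_x)^i\frac{\partial f}{\partial u^\mu_i}$; $\frac{\partial}{\partial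 u^1}$ acts on local functionals since it commutes with $\partial_x$. $\eta$ is a nondegenerate symmetric $N\times N$ matrix, $\eta^{\alpha\beta}$ its inverse, repeated Greek indices are summed. Quantum commutator: via $u^\alpha_j=\sum_{k\in\mathbb Z}(ik)^jp^\alpha_ke^{ikx}$ a quantum differential polynomial becomes a Fourier series in $x$ with coefficients in $\mathbb C[p_{k>0}][[p_{k\le0},\hbar]][[\varepsilon]]$, and a local functional corresponds to the constant Fourier coefficient. Set $f\star g=f\exp\big(\sum_{k>0}i\hbar k\eta^{\alpha\beta}\overleftarrow{\partial_{p^\alpha_k}}\overrightarrow{\partial_{p^\beta_{-k}}}\big)g$ and $[f,g]=f\star g-g\star f$. Tau-structure: for a family of pairwise commuting $\overline H_{\beta,q}$ as in the claim, a tau-structure is a collection $H_{\beta,q}\in(\widehat{\mathcal A}^\hbar_N)^{[\le0]}$, $1\le\beta\le N$, $q\ge-1$, such that (1) $\int H_{\beta,-1}dx=\int\eta_{\beta\mu}u^\mu dx$; (2) $\int H_{\beta,q}dx=\overline H_{\beta,q}$ for $q\ge0$; (3) $[H_{\alpha,p-1},\overline H_{\beta,q}]=[H_{\beta,q-1},\overline H_{\alpha,p}]$ for all $\alpha,\beta$ and $p,q\ge0$. *)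

theory Defs
  imports Complex_Main "HOL-Library.Poly_Mapping"
begin

text \<open>
Indices alpha range over 1..N (natural numbers); u^alpha_k is the
variable (alpha,k).  A quantum differential polynomial is represented by its
coefficient function: monomial in the u-variables, exponent of epsilon,
exponent of hbar  to  complex coefficient.  Fourier images are represented as
coefficient functions on monomials in the variables p^alpha_k (k integer)
together with exponents of epsilon and hbar; the Fourier mode of a p-monomial
equals its total momentum, so a Fourier series is a single such function.
\<close>

type_synonym umon = "(nat \<times> nat) \<Rightarrow>\<^sub>0 nat"
type_synonym qdp = "umon \<Rightarrow> nat \<Rightarrow> nat \<Rightarrow> complex"
type_synonym pmon = "(nat \<times> int) \<Rightarrow>\<^sub>0 nat"
type_synonym pser = "pmon \<Rightarrow> nat \<Rightarrow> nat \<Rightarrow> complex"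

definition fsum :: "('a \<Rightarrow> complex) \<Rightarrow> complex" where
  "fsum g = sum g {x. g x \<noteq> 0}"

definition jet :: "umon \<Rightarrow> nat \<times> nat \<Rightarrow> nat" where
  "jet m = (\<lambda>(a,k). if 0 < k then Poly_Mapping.lookup m (a,k) else 0)"

definition jetdeg :: "umon \<Rightarrow> nat" where
  "jetdeg m = (\<Sum>x\<in>Poly_Mapping.keys m. snd x * Poly_Mapping.lookup m x)"

text \<open>Membership in the space of quantum differential polynomials:
only variables u^alpha_k with 1 <= alpha <= N occur, and for each power of
epsilon and hbar the coefficient is a polynomial in the u^alpha_k, k>0
(with coefficients power series in u^alpha_0).\<close>
definition qdp_valid :: "nat \<Rightarrow> qdp \<Rightarrow> bool" where
  "qdp_valid N f \<longleftrightarrow>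
     (\<forall>m e h. f m e h \<noteq> 0 \<longrightarrow> (\<forall>x\<in>Poly_Mapping.keys m. 1 \<le> fst x \<and> fst x \<le> N)) \<and>
     (\<forall>e h. finite {jet m | m. f m e h \<noteq> 0})"

text \<open>Degree <= 0: deg u_k = k, deg epsilon = -1, deg hbar = -2.\<close>
definition deg_le0 :: "qdp \<Rightarrow> bool" where
  "deg_le0 f \<longleftrightarrow> (\<forall>m e h. f m e h \<noteq> 0 \<longrightarrow> jetdeg m \<le> e + 2 * h)"

text \<open>partial_x = sum u^alpha_{k+1} d/du^alpha_k\<close>
definition dx :: "qdp \<Rightarrow> qdp" where
  "dx f = (\<lambda>m e h. \<Sum>x\<in>{(a,k). (a, Suc k) \<in> Poly_Mapping.keys m}.
      of_nat (Poly_Mapping.lookup m x + 1) *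
      f (m - Poly_Mapping.single (fst x, Suc (snd x)) 1 + Poly_Mapping.single x 1) e h)"

definition du :: "nat \<Rightarrow> nat \<Rightarrow> qdp \<Rightarrow> qdp" where
  "du a i f = (\<lambda>m e h. of_nat (Poly_Mapping.lookup m (a,i) + 1) * f (m + Poly_Mapping.single (a,i) 1) e h)"

text \<open>variational derivative delta/delta u^mu = sum_i (-partial_x)^i d/du^mu_i
(only i <= jet degree of the target monomial contribute)\<close>
definition vard :: "nat \<Rightarrow> qdp \<Rightarrow> qdp" where
  "vard mu f = (\<lambda>m e h. \<Sum>i\<le>jetdeg m. (-1) ^ i * (dx ^^ i) (du mu i f) m e h)"

text \<open>Equality of local functionals: int f dx = int g dx, i.e. f - g lies in
Im partial_x plus power series in epsilon, hbar.\<close>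
definition lf_eq :: "nat \<Rightarrow> qdp \<Rightarrow> qdp \<Rightarrow> bool" where
  "lf_eq N f g \<longleftrightarrow> (\<exists>k c. qdp_valid N k \<and> (\<forall>m e h. m \<noteq> 0 \<longrightarrow> c m e h = 0) \<and>
      (\<forall>m e h. f m e h - g m e h = dx k m e h + c m e h))"

definition lin_dens :: "nat \<Rightarrow> (nat \<Rightarrow> nat \<Rightarrow> complex) \<Rightarrow> nat \<Rightarrow> qdp" where
  "lin_dens N eta b = (\<lambda>m e h. if e = 0 \<and> h = 0 then
      (\<Sum>mu\<in>{1..N}. if m = Poly_Mapping.single (mu,0) 1 then eta b mu else 0) else 0)"

definition quad_dens :: "nat \<Rightarrow> (nat \<Rightarrow> nat \<Rightarrow> complex) \<Rightarrow> qdp" where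
  "quad_dens N eta = (\<lambda>m e h. if e = 0 \<and> h = 0 then
      (\<Sum>mu\<in>{1..N}. \<Sum>nu\<in>{1..N}.
         if m = Poly_Mapping.single (mu,0) 1 + Poly_Mapping.single (nu,0) 1
         then eta mu nu / 2 else 0) else 0)"

text \<open>Fourier image via u^alpha_j = sum_k (ik)^j p^alpha_k e^{ikx}.  The
coefficient of a p-monomial P is obtained by summing over u-monomials m and
distributions c(alpha,j,k) of the factors of m among the p^alpha_k.\<close>
definition pfact :: "('a \<Rightarrow>\<^sub>0 nat) \<Rightarrow> complex" where
  "pfact R = (\<Prod>x\<in>Poly_Mapping.keys R. fact (Poly_Mapping.lookup R x))"

definition fourier :: "qdp \<Rightarrow> pser" where
  "fourier f = (\<lambda>P e h. fsum (\<lambda>(m :: umon, c :: (nat \<times> nat \<times> int) \<Rightarrow>\<^sub>0 nat).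
      if (\<forall>a j. Poly_Mapping.lookup m (a,j) = (\<Sum>k\<in>{k. (a,j,k) \<in> Poly_Mapping.keys c}. Poly_Mapping.lookup c (a,j,k))) \<and>
         (\<forall>a k. Poly_Mapping.lookup P (a,k) = (\<Sum>j\<in>{j. (a,j,k) \<in> Poly_Mapping.keys c}. Poly_Mapping.lookup c (a,j,k)))
      then f m e h * pfact m / pfact c *
           (\<Prod>x\<in>Poly_Mapping.keys c. (case x of (a,j,k) \<Rightarrow> (\<i> * of_int k) ^ (j * Poly_Mapping.lookup c x)))
      else 0))"

definition momentum :: "pmon \<Rightarrow> int" where
  "momentum P = (\<Sum>x\<in>Poly_Mapping.keys P. snd x * int (Poly_Mapping.lookup P x))"

text \<open>local functional = constant Fourier coefficient = momentum-zero part\<close>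
definition zero_mode :: "pser \<Rightarrow> pser" where
  "zero_mode A = (\<lambda>P e h. if momentum P = 0 then A P e h else 0)"

text \<open>Star product
 f * g = f exp(sum_{k>0} i hbar k eta^{alpha beta} <-d/dp^alpha_k ->d/dp^beta_{-k}) g,
expanded: t(alpha,beta,k) counts the factors of each kind in the exponential,
a and b are the resulting multi-indices of differentiation.\<close>
definition star :: "nat \<Rightarrow> (nat \<Rightarrow> nat \<Rightarrow> complex) \<Rightarrow> pser \<Rightarrow> pser \<Rightarrow> pser" where
  "star N etainv A B = (\<lambda>P e h. fsum
     (\<lambda>(t :: (nat \<times> nat \<times> nat) \<Rightarrow>\<^sub>0 nat, a :: pmon, b :: pmon, Q1 :: pmon, Q2 :: pmon,
        e1 :: nat, h1 :: nat, h2 :: nat).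
      if (\<forall>x\<in>Poly_Mapping.keys t. case x of (al,be,k) \<Rightarrow> al \<in> {1..N} \<and> be \<in> {1..N} \<and> 0 < k) \<and>
         (\<forall>al k. Poly_Mapping.lookup a (al,k) =
             (if 0 < k then (\<Sum>be\<in>{1..N}. Poly_Mapping.lookup t (al,be,nat k)) else 0)) \<and>
         (\<forall>be k. Poly_Mapping.lookup b (be,k) =
             (if k < 0 then (\<Sum>al\<in>{1..N}. Poly_Mapping.lookup t (al,be,nat (-k))) else 0)) \<and>
         Q1 + Q2 = P \<and> e1 \<le> e \<and> h1 + h2 + (\<Sum>x\<in>Poly_Mapping.keys t. Poly_Mapping.lookup t x) = h
      then \<i> ^ (\<Sum>x\<in>Poly_Mapping.keys t. Poly_Mapping.lookup t x) *
           (\<Prod>x\<in>Poly_Mapping.keys t. (case x of (al,be,k) \<Rightarrow> (of_nat k * etainv al be) ^ Poly_Mapping.lookup t x)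
                            / fact (Poly_Mapping.lookup t x)) *
           (A (Q1 + a) e1 h1 * pfact (Q1 + a) / pfact Q1) *
           (B (Q2 + b) (e - e1) h2 * pfact (Q2 + b) / pfact Q2)
      else 0))"

definition qcomm :: "nat \<Rightarrow> (nat \<Rightarrow> nat \<Rightarrow> complex) \<Rightarrow> pser \<Rightarrow> pser \<Rightarrow> pser" where
  "qcomm N etainv A B = (\<lambda>P e h. star N etainv A B P e h - star N etainv B A P e h)"

definition tau_structure ::
  "nat \<Rightarrow> (nat \<Rightarrow> nat \<Rightarrow> complex) \<Rightarrow> (nat \<Rightarrow> nat \<Rightarrow> complex) \<Rightarrow>
   (nat \<Rightarrow> nat \<Rightarrow> qdp) \<Rightarrow> (nat \<Rightarrow> int \<Rightarrow> qdp) \<Rightarrow> bool" where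
  "tau_structure N eta etainv hb H \<longleftrightarrow>
     (\<forall>b\<in>{1..N}. \<forall>q\<ge>-1. qdp_valid N (H b q) \<and> deg_le0 (H b q)) \<and>
     (\<forall>b\<in>{1..N}. lf_eq N (H b (-1)) (lin_dens N eta b)) \<and>
     (\<forall>b\<in>{1..N}. \<forall>q::nat. lf_eq N (H b (int q)) (hb b q)) \<and>
     (\<forall>al\<in>{1..N}. \<forall>b\<in>{1..N}. \<forall>p q::nat.
        qcomm N etainv (fourier (H al (int p - 1))) (zero_mode (fourier (hb b q))) =
        qcomm N etainv (fourier (H b (int q - 1))) (zero_mode (fourier (hb al p))))"

end

theory Submission
  imports Defs
begin


lemma fsum_eq_sum: "finite S \<Longrightarrow> {x. g x \<noteq> 0} \<subseteq> S \<Longrightarrow> fsum g = sum g S"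
  unfolding fsum_def by (rule sum.mono_neutral_left) auto

lemma fsum_infinite: "infinite {x. g x \<noteq> 0} \<Longrightarrow> fsum g = 0"
  unfolding fsum_def by simp

lemma fsum_reindex:
  assumes "inj f" "{x. g x \<noteq> 0} \<subseteq> range f"
  shows "fsum (\<lambda>y. g (f y)) = fsum g"
proof -
  have eq: "{y. g (f y) \<noteq> 0} = f -` {x. g x \<noteq> 0}" by auto
  have im: "f ` (f -` {x. g x \<noteq> 0}) = {x. g x \<noteq> 0}" using assms(2) by auto
  show ?thesis
  proof (cases "finite {x. g x \<noteq> 0}")
    case True
    then have "finite (f -` {x. g x \<noteq> 0})" using True assms(1) by (intro finite_vimageI)
    have inj: "inj_on f (f -` {x. g x \<noteq> 0})" using assms(1) by (simp add: inj_on_def inj_def)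
    have "sum g {x. g x \<noteq> 0} = sum g (f ` (f -` {x. g x \<noteq> 0}))" by (simp only: im)
    also have "\<dots> = sum (g \<circ> f) (f -` {x. g x \<noteq> 0})" by (rule sum.reindex[OF inj])
    finally show ?thesis unfolding fsum_def eq by (simp add: comp_def)
  next
    case False
    then have "infinite (f -` {x. g x \<noteq> 0})" using im by (metis finite_imageI)
    then show ?thesis using False unfolding fsum_def eq by simp
  qed
qed

lemma fsum_add:
  assumes "finite {x. g x \<noteq> 0}" "finite {x. h x \<noteq> 0}"
  shows "fsum (\<lambda>x. g x + h x) = fsum g + fsum h"
proof -
  let ?S = "{x. g x \<noteq> 0} \<union> {x. h x \<noteq> 0}"
  have "fsum (\<lambda>x. g x + h x) = sum (\<lambda>x. g x + h x) ?S"
    by (rule fsum_eq_sum) (use assms in auto)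
  also have "\<dots> = sum g ?S + sum h ?S" by (simp add: sum.distrib)
  also have "sum g ?S = fsum g" by (rule fsum_eq_sum[symmetric]) (use assms in auto)
  also have "sum h ?S = fsum h" by (rule fsum_eq_sum[symmetric]) (use assms in auto)
  finally show ?thesis .
qed

lemma fsum_cmult: "fsum (\<lambda>x. c * g x) = c * fsum g"
proof (cases "c = 0")
  case True then show ?thesis by (simp add: fsum_def)
next
  case False
  then have "{x. c * g x \<noteq> 0} = {x. g x \<noteq> 0}" by auto
  then show ?thesis unfolding fsum_def by (simp add: sum_distrib_left)
qed

lemma fsum_sum:
  assumes "finite I" "\<forall>i\<in>I. finite {x. g i x \<noteq> 0}"
  shows "fsum (\<lambda>x. \<Sum>i\<in>I. g i x) = (\<Sum>i\<in>I. fsum (g i))"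
proof -
  let ?S = "\<Union>i\<in>I. {x. g i x \<noteq> 0}"
  have fS: "finite ?S" using assms by auto
  have "fsum (\<lambda>x. \<Sum>i\<in>I. g i x) = sum (\<lambda>x. \<Sum>i\<in>I. g i x) ?S"
  proof (rule fsum_eq_sum[OF fS])
    show "{x. (\<Sum>i\<in>I. g i x) \<noteq> 0} \<subseteq> ?S"
    proof
      fix x assume "x \<in> {x. (\<Sum>i\<in>I. g i x) \<noteq> 0}"
      then obtain i where "i \<in> I" "g i x \<noteq> 0" by (metis (mono_tags, lifting) mem_Collect_eq sum.neutral)
      then show "x \<in> ?S" by auto
    qed
  qed
  also have "\<dots> = (\<Sum>i\<in>I. sum (g i) ?S)" by (rule sum.swap)
  also have "\<dots> = (\<Sum>i\<in>I. fsum (g i))"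
    by (rule sum.cong[OF refl], rule fsum_eq_sum[symmetric, OF fS]) auto
  finally show ?thesis .
qed

lemma fsum_nested:
  assumes "finite {x. \<exists>y\<in>S x. g x y \<noteq> 0}" "\<And>x. finite (S x)"
  shows "fsum (\<lambda>x. \<Sum>y\<in>S x. g x y) = fsum (\<lambda>(x,y). if y \<in> S x then g x y else 0)"
proof -
  let ?A = "{x. \<exists>y\<in>S x. g x y \<noteq> 0}"
  have "fsum (\<lambda>x. \<Sum>y\<in>S x. g x y) = (\<Sum>x\<in>?A. \<Sum>y\<in>S x. g x y)"
    by (rule fsum_eq_sum[OF assms(1)]) (auto elim: sum.not_neutral_contains_not_neutral)
  also have "\<dots> = (\<Sum>(x,y)\<in>Sigma ?A S. g x y)"
    by (rule sum.Sigma) (use assms in auto)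
  also have "\<dots> = (\<Sum>(x,y)\<in>Sigma ?A S. if y \<in> S x then g x y else 0)"
    by (rule sum.cong) auto
  also have "\<dots> = fsum (\<lambda>(x,y). if y \<in> S x then g x y else 0)"
    by (rule fsum_eq_sum[symmetric]) (use assms in \<open>auto split: if_splits\<close>)
  finally show ?thesis .
qed



lemma lookup_add_single: "Poly_Mapping.lookup (c + Poly_Mapping.single y (1::nat)) x =
   Poly_Mapping.lookup c x + (if x = y then 1 else 0)"
  by (simp add: lookup_add lookup_single when_def)

lemma keys_add_single: "Poly_Mapping.keys (c + Poly_Mapping.single y (1::nat)) = insert y (Poly_Mapping.keys c)"
  by (rule set_eqI, unfold insert_iff in_keys_iff lookup_add_single) auto

lemmas keys_add_single_simp[simp] = keys_add_single[unfolded One_nat_def]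
lemmas lookup_add_single_simp[simp] = lookup_add_single[unfolded One_nat_def]

lemma prod_keys_super:
  assumes "finite S" "Poly_Mapping.keys c \<subseteq> S" "\<And>x. h x 0 = 1"
  shows "(\<Prod>x\<in>Poly_Mapping.keys c. h x (Poly_Mapping.lookup c x)) = (\<Prod>x\<in>S. h x (Poly_Mapping.lookup c x))"
  by (rule prod.mono_neutral_left) (use assms in \<open>auto simp: in_keys_iff\<close>)

lemma sum_keys_super:
  assumes "finite S" "Poly_Mapping.keys c \<subseteq> S" "\<And>x. h x 0 = 0"
  shows "(\<Sum>x\<in>Poly_Mapping.keys c. h x (Poly_Mapping.lookup c x)) = (\<Sum>x\<in>S. h x (Poly_Mapping.lookup c x))"
  by (rule sum.mono_neutral_left) (use assms in \<open>auto simp: in_keys_iff\<close>)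

lemma pfact_super:
  assumes "finite S" "Poly_Mapping.keys R \<subseteq> S"
  shows "pfact R = (\<Prod>x\<in>S. fact (Poly_Mapping.lookup R x))"
  unfolding pfact_def by (rule prod_keys_super[OF assms]) simp

lemma pfact_nonzero: "pfact R \<noteq> 0"
  unfolding pfact_def by (simp add: prod_zero_iff)

lemma pfact_add_single:
  "pfact (R + Poly_Mapping.single y (1::nat)) = of_nat (Poly_Mapping.lookup R y + 1) * pfact R"
proof -
  let ?S = "insert y (Poly_Mapping.keys R)"
  let ?Q = "(\<Prod>x\<in>?S - {y}. fact (Poly_Mapping.lookup R x)) :: complex"
  let ?n = "Poly_Mapping.lookup R y"
  have f: "finite ?S" by simp
  have h1: "pfact (R + Poly_Mapping.single y 1) = fact (?n + 1) * ?Q"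
  proof -
    have "pfact (R + Poly_Mapping.single y 1) = (\<Prod>x\<in>?S. fact (Poly_Mapping.lookup (R + Poly_Mapping.single y 1) x))"
      by (rule pfact_super[OF f]) (simp add: keys_add_single)
    also have "\<dots> = fact (?n + 1) * ?Q"
      by (subst prod.remove[of _ y]) (auto simp: lookup_add_single intro!: prod.cong)
    finally show ?thesis .
  qed
  have h2: "pfact R = fact ?n * ?Q"
  proof -
    have "pfact R = (\<Prod>x\<in>?S. fact (Poly_Mapping.lookup R x) :: complex)" by (rule pfact_super[OF f]) auto
    also have "\<dots> = fact ?n * ?Q"
      by (rule prod.remove) auto
    finally show ?thesis .
  qed
  have h3: "(fact (?n + 1) :: complex) = of_nat (?n + 1) * fact ?n"
    by (simp only: Suc_eq_plus1[symmetric] fact_Suc)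
  show ?thesis by (simp only: h1 h2 h3 mult.assoc)
qed

lemma prodpow_super:
  assumes "finite S" "Poly_Mapping.keys c \<subseteq> S"
  shows "(\<Prod>x\<in>Poly_Mapping.keys c. v x ^ Poly_Mapping.lookup c x) = (\<Prod>x\<in>S. v x ^ Poly_Mapping.lookup c x)"
  by (rule prod_keys_super[OF assms]) simp

lemma prodpow_add_single:
  fixes v :: "'a \<Rightarrow> 'b::comm_monoid_mult"
  shows "(\<Prod>x\<in>Poly_Mapping.keys (c + Poly_Mapping.single y (1::nat)). v x ^ Poly_Mapping.lookup (c + Poly_Mapping.single y 1) x)
     = v y * (\<Prod>x\<in>Poly_Mapping.keys c. v x ^ Poly_Mapping.lookup c x)"
proof -
  let ?S = "insert y (Poly_Mapping.keys c)"
  have f: "finite ?S" by simp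
  have "(\<Prod>x\<in>Poly_Mapping.keys (c + Poly_Mapping.single y 1). v x ^ Poly_Mapping.lookup (c + Poly_Mapping.single y 1) x)
     = (\<Prod>x\<in>?S. v x ^ Poly_Mapping.lookup (c + Poly_Mapping.single y 1) x)"
    by (rule prodpow_super[OF f]) (simp add: keys_add_single)
  also have "\<dots> = (\<Prod>x\<in>?S. (if x = y then v y else 1) * v x ^ Poly_Mapping.lookup c x)"
    by (rule prod.cong) (auto simp: lookup_add_single)
  also have "\<dots> = v y * (\<Prod>x\<in>?S. v x ^ Poly_Mapping.lookup c x)"
    by (simp add: prod.distrib prod.delta)
  also have "(\<Prod>x\<in>?S. v x ^ Poly_Mapping.lookup c x) = (\<Prod>x\<in>Poly_Mapping.keys c. v x ^ Poly_Mapping.lookup c x)"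
    by (rule prodpow_super[symmetric]) auto
  finally show ?thesis .
qed

lemma momentum_super:
  assumes "finite S" "Poly_Mapping.keys P \<subseteq> S"
  shows "momentum P = (\<Sum>x\<in>S. snd x * int (Poly_Mapping.lookup P x))"
  unfolding momentum_def by (rule sum_keys_super[OF assms]) simp

lemma momentum_add: "momentum (P + Q) = momentum P + momentum Q"
proof -
  let ?S = "Poly_Mapping.keys P \<union> Poly_Mapping.keys Q"
  have f: "finite ?S" by simp
  have "momentum (P + Q) = (\<Sum>x\<in>?S. snd x * int (Poly_Mapping.lookup (P+Q) x))"
    by (rule momentum_super[OF f]) (rule keys_add)
  also have "\<dots> = (\<Sum>x\<in>?S. snd x * int (Poly_Mapping.lookup P x)) + (\<Sum>x\<in>?S. snd x * int (Poly_Mapping.lookup Q x))"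
    by (simp add: lookup_add sum.distrib distrib_left)
  also have "\<dots> = momentum P + momentum Q"
    by (simp add: momentum_super[OF f])
  finally show ?thesis .
qed

lemma momentum_single: "momentum (Poly_Mapping.single x (1::nat)) = snd x"
  unfolding momentum_def by simp

lemma momentum_zero [simp]: "momentum 0 = 0"
  unfolding momentum_def by simp



definition stc :: "nat \<Rightarrow> ((nat \<times> nat \<times> nat) \<Rightarrow>\<^sub>0 nat) \<Rightarrow> pmon \<Rightarrow> pmon \<Rightarrow> bool" where
  "stc N t a b \<longleftrightarrow> (\<forall>x\<in>Poly_Mapping.keys t. case x of (al,be,k) \<Rightarrow> al \<in> {1..N} \<and> be \<in> {1..N} \<and> 0 < k) \<and>
         (\<forall>al k. Poly_Mapping.lookup a (al,k) =
             (if 0 < k then (\<Sum>be\<in>{1..N}. Poly_Mapping.lookup t (al,be,nat k)) else 0)) \<and>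
         (\<forall>be k. Poly_Mapping.lookup b (be,k) =
             (if k < 0 then (\<Sum>al\<in>{1..N}. Poly_Mapping.lookup t (al,be,nat (-k))) else 0))"

definition stw :: "(nat \<Rightarrow> nat \<Rightarrow> complex) \<Rightarrow> ((nat \<times> nat \<times> nat) \<Rightarrow>\<^sub>0 nat) \<Rightarrow> complex" where
  "stw etainv t = \<i> ^ (\<Sum>x\<in>Poly_Mapping.keys t. Poly_Mapping.lookup t x) *
           (\<Prod>x\<in>Poly_Mapping.keys t. (case x of (al,be,k) \<Rightarrow> (of_nat k * etainv al be) ^ Poly_Mapping.lookup t x)
                            / fact (Poly_Mapping.lookup t x))"

definition tsz :: "((nat \<times> nat \<times> nat) \<Rightarrow>\<^sub>0 nat) \<Rightarrow> nat" where
  "tsz t = (\<Sum>x\<in>Poly_Mapping.keys t. Poly_Mapping.lookup t x)"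

type_synonym stup = "((nat \<times> nat \<times> nat) \<Rightarrow>\<^sub>0 nat) \<times> pmon \<times> pmon \<times> pmon \<times> pmon \<times> nat \<times> nat \<times> nat"

definition stt :: "nat \<Rightarrow> (nat \<Rightarrow> nat \<Rightarrow> complex) \<Rightarrow> pser \<Rightarrow> pser \<Rightarrow> pmon \<Rightarrow> nat \<Rightarrow> nat \<Rightarrow> stup \<Rightarrow> complex" where
  "stt N etainv A B P e h = (\<lambda>(t,a,b,Q1,Q2,e1,h1,h2).
     if stc N t a b \<and> Q1 + Q2 = P \<and> e1 \<le> e \<and> h1 + h2 + tsz t = h
     then stw etainv t * (A (Q1 + a) e1 h1 * pfact (Q1 + a) / pfact Q1) *
           (B (Q2 + b) (e - e1) h2 * pfact (Q2 + b) / pfact Q2)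
     else 0)"

lemma star_stt: "star N etainv A B P e h = fsum (stt N etainv A B P e h)"
  unfolding star_def stt_def stc_def stw_def tsz_def by (simp add: case_prod_beta)

lemma finite_pm:
  assumes "finite K"
  shows "finite {t :: 'a \<Rightarrow>\<^sub>0 nat. Poly_Mapping.keys t \<subseteq> K \<and> (\<forall>x. Poly_Mapping.lookup t x \<le> B)}"
proof -
  let ?F = "{f. \<forall>x. (x \<in> K \<longrightarrow> f x \<in> {0..B}) \<and> (x \<notin> K \<longrightarrow> f x = 0)}"
  have fF: "finite ?F" by (rule finite_set_of_finite_funs) (use assms in auto)
  have "Poly_Mapping.lookup ` {t :: 'a \<Rightarrow>\<^sub>0 nat. Poly_Mapping.keys t \<subseteq> K \<and> (\<forall>x. Poly_Mapping.lookup t x \<le> B)} \<subseteq> ?F"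
    by (auto simp: in_keys_iff)
  then have "finite (Poly_Mapping.lookup ` {t :: 'a \<Rightarrow>\<^sub>0 nat. Poly_Mapping.keys t \<subseteq> K \<and> (\<forall>x. Poly_Mapping.lookup t x \<le> B)})"
    using fF finite_subset by blast
  moreover have "inj_on Poly_Mapping.lookup X" for X :: "('a \<Rightarrow>\<^sub>0 nat) set"
    by (rule inj_onI) (simp add: poly_mapping_eqI)
  ultimately show ?thesis using finite_imageD by blast
qed

lemma finite_split:
  "finite {(Q1, Q2). Q1 + Q2 = (P :: 'a \<Rightarrow>\<^sub>0 nat)}"
proof -
  let ?K = "{Q :: 'a \<Rightarrow>\<^sub>0 nat. Poly_Mapping.keys Q \<subseteq> Poly_Mapping.keys P \<and> (\<forall>x. Poly_Mapping.lookup Q x \<le> Max (insert 0 (Poly_Mapping.lookup P ` Poly_Mapping.keys P)))}"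
  have fK: "finite ?K" by (rule finite_pm) simp
  have le: "Poly_Mapping.lookup P x \<le> Max (insert 0 (Poly_Mapping.lookup P ` Poly_Mapping.keys P))" for x
    by (cases "x \<in> Poly_Mapping.keys P") (auto simp: in_keys_iff)
  have "{(Q1, Q2). Q1 + Q2 = P} \<subseteq> ?K \<times> ?K"
  proof
    fix z assume "z \<in> {(Q1, Q2). Q1 + Q2 = P}"
    then obtain Q1 Q2 where z: "z = (Q1, Q2)" and "Q1 + Q2 = P" by auto
    then have h: "Poly_Mapping.lookup Q1 x + Poly_Mapping.lookup Q2 x = Poly_Mapping.lookup P x" for x
      using lookup_add[of Q1 Q2 x] \<open>Q1 + Q2 = P\<close> by simp
    have l1: "Poly_Mapping.lookup Q1 x \<le> Poly_Mapping.lookup P x" for x using h[of x] by linarith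
    have l2: "Poly_Mapping.lookup Q2 x \<le> Poly_Mapping.lookup P x" for x using h[of x] by linarith
    show "z \<in> ?K \<times> ?K" unfolding z
    proof -
      have s1: "Poly_Mapping.keys Q1 \<subseteq> Poly_Mapping.keys P"
        proof
        fix x assume "x \<in> Poly_Mapping.keys Q1"
        then have "Poly_Mapping.lookup Q1 x \<noteq> 0" by (simp add: in_keys_iff)
        with l1[of x] have "Poly_Mapping.lookup P x \<noteq> 0" by linarith
        then show "x \<in> Poly_Mapping.keys P" by (simp add: in_keys_iff)
      qed
      have s2: "Poly_Mapping.keys Q2 \<subseteq> Poly_Mapping.keys P"
        proof
        fix x assume "x \<in> Poly_Mapping.keys Q2"
        then have "Poly_Mapping.lookup Q2 x \<noteq> 0" by (simp add: in_keys_iff)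
        with l2[of x] have "Poly_Mapping.lookup P x \<noteq> 0" by linarith
        then show "x \<in> Poly_Mapping.keys P" by (simp add: in_keys_iff)
      qed
      have b1: "\<forall>x. Poly_Mapping.lookup Q1 x \<le> Max (insert 0 (Poly_Mapping.lookup P ` Poly_Mapping.keys P))"
        by (intro allI, rule order_trans[OF l1 le])
      have b2: "\<forall>x. Poly_Mapping.lookup Q2 x \<le> Max (insert 0 (Poly_Mapping.lookup P ` Poly_Mapping.keys P))"
        by (intro allI, rule order_trans[OF l2 le])
      show "(Q1, Q2) \<in> ?K \<times> ?K" using s1 s2 b1 b2 by blast
    qed
  qed
  then show ?thesis by (rule finite_subset) (rule finite_cartesian_product[OF fK fK])
qed

definition tmax :: "((nat \<times> nat \<times> nat) \<Rightarrow>\<^sub>0 nat) \<Rightarrow> nat" where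
  "tmax t = Max (insert 0 ((\<lambda>x. snd (snd x)) ` Poly_Mapping.keys t))"

lemma tmax_ge: "x \<in> Poly_Mapping.keys t \<Longrightarrow> snd (snd x) \<le> tmax t"
  unfolding tmax_def by (rule Max_ge) auto

lemma stc_keys_box:
  assumes "stc N t a b"
  shows "Poly_Mapping.keys t \<subseteq> {1..N} \<times> {1..N} \<times> {1..tmax t}"
proof
  fix x assume x: "x \<in> Poly_Mapping.keys t"
  obtain al be k where xe: "x = (al,be,k)" by (cases x) auto
  have "al \<in> {1..N} \<and> be \<in> {1..N} \<and> 0 < k" using assms x unfolding stc_def xe by fastforce
  moreover have "k \<le> tmax t" using tmax_ge[OF x] xe by simp
  ultimately show "x \<in> {1..N} \<times> {1..N} \<times> {1..tmax t}" using xe by auto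
qed

lemma tsum_box:
  assumes "stc N t a b"
  shows "(\<Sum>x\<in>Poly_Mapping.keys t. g x * int (Poly_Mapping.lookup t x)) =
     (\<Sum>al\<in>{1..N}. \<Sum>be\<in>{1..N}. \<Sum>k\<in>{1..tmax t}. g (al,be,k) * int (Poly_Mapping.lookup t (al,be,k)))"
proof -
  have "(\<Sum>x\<in>Poly_Mapping.keys t. g x * int (Poly_Mapping.lookup t x)) =
        (\<Sum>x\<in>{1..N} \<times> {1..N} \<times> {1..tmax t}. g x * int (Poly_Mapping.lookup t x))"
    by (rule sum_keys_super[OF _ stc_keys_box[OF assms]]) auto
  also have "\<dots> = (\<Sum>al\<in>{1..N}. \<Sum>be\<in>{1..N}. \<Sum>k\<in>{1..tmax t}. g (al,be,k) * int (Poly_Mapping.lookup t (al,be,k)))"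
    by (simp add: sum.cartesian_product)
  finally show ?thesis .
qed

lemma stc_mom_a:
  assumes "stc N t a b"
  shows "momentum a = (\<Sum>x\<in>Poly_Mapping.keys t. int (snd (snd x)) * int (Poly_Mapping.lookup t x))"
proof -
  let ?K = "tmax t"
  have la: "Poly_Mapping.lookup a (al,k) =
             (if 0 < k then (\<Sum>be\<in>{1..N}. Poly_Mapping.lookup t (al,be,nat k)) else 0)" for al k
    using assms unfolding stc_def by blast
  have kt: "Poly_Mapping.keys t \<subseteq> {1..N} \<times> {1..N} \<times> {1..?K}" by (rule stc_keys_box[OF assms])
  have ka: "Poly_Mapping.keys a \<subseteq> {1..N} \<times> (int ` {1..?K})"
  proof
    fix y assume y: "y \<in> Poly_Mapping.keys a"
    obtain al k where ye: "y = (al,k)" by (cases y) auto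
    have nz: "Poly_Mapping.lookup a (al,k) \<noteq> 0" using y ye by (simp add: in_keys_iff)
    then have k0: "0 < k" using la[of al k] by (auto split: if_splits)
    then have "(\<Sum>be\<in>{1..N}. Poly_Mapping.lookup t (al,be,nat k)) \<noteq> 0" using nz la[of al k] by simp
    then obtain be where "be \<in> {1..N}" "Poly_Mapping.lookup t (al,be,nat k) \<noteq> 0"
      by (meson sum.neutral)
    then have "(al,be,nat k) \<in> Poly_Mapping.keys t" by (simp add: in_keys_iff)
    then have "(al,be,nat k) \<in> {1..N} \<times> {1..N} \<times> {1..?K}" using kt by blast
    then have "al \<in> {1..N}" "nat k \<in> {1..?K}" by auto
    moreover have "k = int (nat k)" using k0 by simp
    ultimately show "y \<in> {1..N} \<times> (int ` {1..?K})" using ye by blast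
  qed
  have "momentum a = (\<Sum>y\<in>{1..N} \<times> (int ` {1..?K}). snd y * int (Poly_Mapping.lookup a y))"
    by (rule momentum_super[OF _ ka]) auto
  also have "\<dots> = (\<Sum>al\<in>{1..N}. \<Sum>k'\<in>int ` {1..?K}. k' * int (Poly_Mapping.lookup a (al,k')))"
    by (simp add: sum.cartesian_product split_beta)
  also have "\<dots> = (\<Sum>al\<in>{1..N}. \<Sum>k\<in>{1..?K}. int k * int (Poly_Mapping.lookup a (al,int k)))"
    by (rule sum.cong[OF refl], subst sum.reindex) (auto simp: inj_on_def)
  also have "\<dots> = (\<Sum>al\<in>{1..N}. \<Sum>k\<in>{1..?K}. \<Sum>be\<in>{1..N}. int k * int (Poly_Mapping.lookup t (al,be,k)))"
    by (rule sum.cong[OF refl], rule sum.cong[OF refl]) (simp add: la sum_distrib_left)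
  also have "\<dots> = (\<Sum>al\<in>{1..N}. \<Sum>be\<in>{1..N}. \<Sum>k\<in>{1..?K}. int k * int (Poly_Mapping.lookup t (al,be,k)))"
    by (rule sum.cong[OF refl], rule sum.swap)
  also have "\<dots> = (\<Sum>x\<in>Poly_Mapping.keys t. int (snd (snd x)) * int (Poly_Mapping.lookup t x))"
    by (subst tsum_box[OF assms]) simp
  finally show ?thesis .
qed

lemma stc_mom_b:
  assumes "stc N t a b"
  shows "momentum b = - (\<Sum>x\<in>Poly_Mapping.keys t. int (snd (snd x)) * int (Poly_Mapping.lookup t x))"
proof -
  let ?K = "tmax t"
  have lb: "Poly_Mapping.lookup b (be,k) =
             (if k < 0 then (\<Sum>al\<in>{1..N}. Poly_Mapping.lookup t (al,be,nat (-k))) else 0)" for be k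
    using assms unfolding stc_def by blast
  have kt: "Poly_Mapping.keys t \<subseteq> {1..N} \<times> {1..N} \<times> {1..?K}" by (rule stc_keys_box[OF assms])
  have kb: "Poly_Mapping.keys b \<subseteq> {1..N} \<times> ((\<lambda>k. - int k) ` {1..?K})"
  proof
    fix y assume y: "y \<in> Poly_Mapping.keys b"
    obtain be k where ye: "y = (be,k)" by (cases y) auto
    have nz: "Poly_Mapping.lookup b (be,k) \<noteq> 0" using y ye by (simp add: in_keys_iff)
    then have k0: "k < 0" using lb[of be k] by (auto split: if_splits)
    then have "(\<Sum>al\<in>{1..N}. Poly_Mapping.lookup t (al,be,nat (-k))) \<noteq> 0" using nz lb[of be k] by simp
    then obtain al where "al \<in> {1..N}" "Poly_Mapping.lookup t (al,be,nat (-k)) \<noteq> 0"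
      by (meson sum.neutral)
    then have "(al,be,nat (-k)) \<in> Poly_Mapping.keys t" by (simp add: in_keys_iff)
    then have "(al,be,nat (-k)) \<in> {1..N} \<times> {1..N} \<times> {1..?K}" using kt by blast
    then have "be \<in> {1..N}" "nat (-k) \<in> {1..?K}" by auto
    moreover have "k = - int (nat (-k))" using k0 by simp
    ultimately show "y \<in> {1..N} \<times> ((\<lambda>k. - int k) ` {1..?K})" using ye by blast
  qed
  have "momentum b = (\<Sum>y\<in>{1..N} \<times> ((\<lambda>k. - int k) ` {1..?K}). snd y * int (Poly_Mapping.lookup b y))"
    by (rule momentum_super[OF _ kb]) auto
  also have "\<dots> = (\<Sum>be\<in>{1..N}. \<Sum>k'\<in>(\<lambda>k. - int k) ` {1..?K}. k' * int (Poly_Mapping.lookup b (be,k')))"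
    by (simp add: sum.cartesian_product split_beta)
  also have "\<dots> = (\<Sum>be\<in>{1..N}. \<Sum>k\<in>{1..?K}. - int k * int (Poly_Mapping.lookup b (be,- int k)))"
    by (rule sum.cong[OF refl], subst sum.reindex) (auto simp: inj_on_def)
  also have "\<dots> = (\<Sum>be\<in>{1..N}. \<Sum>k\<in>{1..?K}. \<Sum>al\<in>{1..N}. - (int k * int (Poly_Mapping.lookup t (al,be,k))))"
    by (rule sum.cong[OF refl], rule sum.cong[OF refl]) (simp add: lb sum_distrib_left sum_negf)
  also have "\<dots> = (\<Sum>be\<in>{1..N}. \<Sum>al\<in>{1..N}. \<Sum>k\<in>{1..?K}. - (int k * int (Poly_Mapping.lookup t (al,be,k))))"
    by (rule sum.cong[OF refl], rule sum.swap)
  also have "\<dots> = (\<Sum>al\<in>{1..N}. \<Sum>be\<in>{1..N}. \<Sum>k\<in>{1..?K}. - (int k * int (Poly_Mapping.lookup t (al,be,k))))"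
    by (rule sum.swap)
  also have "\<dots> = - (\<Sum>al\<in>{1..N}. \<Sum>be\<in>{1..N}. \<Sum>k\<in>{1..?K}. int k * int (Poly_Mapping.lookup t (al,be,k)))"
    by (simp add: sum_negf)
  also have "\<dots> = - (\<Sum>x\<in>Poly_Mapping.keys t. int (snd (snd x)) * int (Poly_Mapping.lookup t x))"
    by (subst tsum_box[OF assms]) simp
  finally show ?thesis .
qed

lemma stc_mom: "stc N t a b \<Longrightarrow> momentum a + momentum b = 0"
  by (simp add: stc_mom_a stc_mom_b)

lemma stc_k_le:
  assumes "stc N t a b" "x \<in> Poly_Mapping.keys t"
  shows "int (snd (snd x)) \<le> momentum a"
proof -
  have "int (snd (snd x)) \<le> int (snd (snd x)) * int (Poly_Mapping.lookup t x)"
  proof -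
    obtain n where "Poly_Mapping.lookup t x = Suc n" using assms(2)
      by (metis in_keys_iff not0_implies_Suc)
    then show ?thesis by (simp add: algebra_simps)
  qed
  also have "\<dots> \<le> (\<Sum>x\<in>Poly_Mapping.keys t. int (snd (snd x)) * int (Poly_Mapping.lookup t x))"
    by (rule member_le_sum[OF assms(2)]) auto
  finally show ?thesis by (simp add: stc_mom_a[OF assms(1)])
qed

lemma tsz_ge: "Poly_Mapping.lookup t x \<le> tsz t"
proof (cases "x \<in> Poly_Mapping.keys t")
  case True then show ?thesis unfolding tsz_def by (rule member_le_sum) auto
next
  case False then show ?thesis by (simp add: in_keys_iff)
qed

definition fa :: "nat \<Rightarrow> ((nat \<times> nat \<times> nat) \<Rightarrow>\<^sub>0 nat) \<Rightarrow> pmon" where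
  "fa N t = (THE a. \<forall>al k. Poly_Mapping.lookup a (al,k) =
             (if 0 < k then (\<Sum>be\<in>{1..N}. Poly_Mapping.lookup t (al,be,nat k)) else 0))"

definition fb :: "nat \<Rightarrow> ((nat \<times> nat \<times> nat) \<Rightarrow>\<^sub>0 nat) \<Rightarrow> pmon" where
  "fb N t = (THE b. \<forall>be k. Poly_Mapping.lookup b (be,k) =
             (if k < 0 then (\<Sum>al\<in>{1..N}. Poly_Mapping.lookup t (al,be,nat (-k))) else 0))"

lemma stc_fa: "stc N t a b \<Longrightarrow> a = fa N t"
  unfolding fa_def
  by (rule the_equality[symmetric]) (auto simp: stc_def intro!: poly_mapping_eqI)

lemma stc_fb: "stc N t a b \<Longrightarrow> b = fb N t"
  unfolding fb_def
  by (rule the_equality[symmetric]) (auto simp: stc_def intro!: poly_mapping_eqI)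

definition fixmom :: "int \<Rightarrow> pser \<Rightarrow> bool" where
  "fixmom m A \<longleftrightarrow> (\<forall>Q e h. A Q e h \<noteq> 0 \<longrightarrow> momentum Q = m)"

lemma stt_nz:
  assumes "stt N etainv A B P e h (t,a,b,Q1,Q2,e1,h1,h2) \<noteq> 0"
  shows "stc N t a b" "Q1 + Q2 = P" "e1 \<le> e" "h1 + h2 + tsz t = h"
    "A (Q1 + a) e1 h1 \<noteq> 0" "B (Q2 + b) (e - e1) h2 \<noteq> 0"
  using assms unfolding stt_def by (auto split: if_splits)

lemma stt_finite_gen:
  assumes bound: "\<And>t a b Q1 Q2 e1 h1 h2 x. stt N etainv A B P e h (t,a,b,Q1,Q2,e1,h1,h2) \<noteq> 0 \<Longrightarrow>
      x \<in> Poly_Mapping.keys t \<Longrightarrow> snd (snd x) \<le> Kb"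
  shows "finite {T. stt N etainv A B P e h T \<noteq> 0}"
proof -
  let ?TS = "{t :: (nat \<times> nat \<times> nat) \<Rightarrow>\<^sub>0 nat. Poly_Mapping.keys t \<subseteq> {1..N} \<times> {1..N} \<times> {1..Kb} \<and> (\<forall>x. Poly_Mapping.lookup t x \<le> h)}"
  let ?SP = "{(Q1, Q2). Q1 + Q2 = P}"
  let ?D = "?TS \<times> ?SP \<times> {..e} \<times> {..h} \<times> {..h}"
  let ?f = "\<lambda>(t, (Q1,Q2), e1, h1, h2). (t, fa N t, fb N t, Q1, Q2, e1, h1, h2)"
  have fD: "finite ?D"
    by (intro finite_cartesian_product finite_pm finite_split) auto
  have "{T. stt N etainv A B P e h T \<noteq> 0} \<subseteq> ?f ` ?D"
  proof
    fix T assume "T \<in> {T. stt N etainv A B P e h T \<noteq> 0}"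
    then obtain t a b Q1 Q2 e1 h1 h2 where Te: "T = (t,a,b,Q1,Q2,e1,h1,h2)"
      and nz: "stt N etainv A B P e h (t,a,b,Q1,Q2,e1,h1,h2) \<noteq> 0" by (cases T) auto
    note z = stt_nz[OF nz]
    have kt: "Poly_Mapping.keys t \<subseteq> {1..N} \<times> {1..N} \<times> {1..Kb}"
    proof
      fix x assume x: "x \<in> Poly_Mapping.keys t"
      have "x \<in> {1..N} \<times> {1..N} \<times> {1..tmax t}" using stc_keys_box[OF z(1)] x by blast
      moreover have "snd (snd x) \<le> Kb" by (rule bound[OF nz x])
      ultimately show "x \<in> {1..N} \<times> {1..N} \<times> {1..Kb}" by auto
    qed
    have vt: "\<forall>x. Poly_Mapping.lookup t x \<le> h"
      using tsz_ge z(4) by (metis le_add2 order_trans)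
    have "T = ?f (t, (Q1,Q2), e1, h1, h2)"
      using Te stc_fa[OF z(1)] stc_fb[OF z(1)] by simp
    moreover have "(t, (Q1,Q2), e1, h1, h2) \<in> ?D"
      using kt vt z(2) z(3) z(4) by auto
    ultimately show "T \<in> ?f ` ?D" by (rule image_eqI)
  qed
  then show ?thesis by (rule finite_subset) (rule finite_imageI[OF fD])
qed

definition MQ :: "pmon \<Rightarrow> int" where
  "MQ P = Max ((\<lambda>(Q1,Q2). \<bar>momentum Q1\<bar> + \<bar>momentum Q2\<bar>) ` {(Q1, Q2). Q1 + Q2 = P})"

lemma MQ_ge: "Q1 + Q2 = P \<Longrightarrow> \<bar>momentum Q1\<bar> + \<bar>momentum Q2\<bar> \<le> MQ P"
  unfolding MQ_def by (rule Max_ge) (auto intro: finite_imageI finite_split)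

lemma stt_finite_A:
  assumes "fixmom mA A"
  shows "finite {T. stt N etainv A B P e h T \<noteq> 0}"
proof (rule stt_finite_gen[where Kb = "nat (\<bar>mA\<bar> + MQ P)"])
  fix t a b Q1 Q2 e1 h1 h2 x
  assume nz: "stt N etainv A B P e h (t, a, b, Q1, Q2, e1, h1, h2) \<noteq> 0" and x: "x \<in> Poly_Mapping.keys t"
  note z = stt_nz[OF nz]
  have "momentum (Q1 + a) = mA" using assms z(5) unfolding fixmom_def by blast
  then have m: "momentum Q1 + momentum a = mA" by (simp add: momentum_add)
  have "int (snd (snd x)) \<le> momentum a" by (rule stc_k_le[OF z(1) x])
  moreover have "\<bar>momentum Q1\<bar> + \<bar>momentum Q2\<bar> \<le> MQ P" by (rule MQ_ge[OF z(2)])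
  ultimately show "snd (snd x) \<le> nat (\<bar>mA\<bar> + MQ P)" using m by linarith
qed

lemma stt_finite_B:
  assumes "fixmom mB B"
  shows "finite {T. stt N etainv A B P e h T \<noteq> 0}"
proof (rule stt_finite_gen[where Kb = "nat (\<bar>mB\<bar> + MQ P)"])
  fix t a b Q1 Q2 e1 h1 h2 x
  assume nz: "stt N etainv A B P e h (t, a, b, Q1, Q2, e1, h1, h2) \<noteq> 0" and x: "x \<in> Poly_Mapping.keys t"
  note z = stt_nz[OF nz]
  have "momentum (Q2 + b) = mB" using assms z(6) unfolding fixmom_def by blast
  then have m: "momentum Q2 + momentum b = mB" by (simp add: momentum_add)
  have "momentum a + momentum b = 0" by (rule stc_mom[OF z(1)])
  moreover have "int (snd (snd x)) \<le> momentum a" by (rule stc_k_le[OF z(1) x])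
  moreover have "\<bar>momentum Q1\<bar> + \<bar>momentum Q2\<bar> \<le> MQ P" by (rule MQ_ge[OF z(2)])
  ultimately show "snd (snd x) \<le> nat (\<bar>mB\<bar> + MQ P)" using m by linarith
qed



lemma star_local_left:
  assumes "fixmom 0 B" "\<forall>Q e h. momentum Q = momentum P \<longrightarrow> A Q e h = A' Q e h"
  shows "star N etainv A B P e h = star N etainv A' B P e h"
proof -
  have "stt N etainv A B P e h T = stt N etainv A' B P e h T" for T
  proof -
    obtain t a b Q1 Q2 e1 h1 h2 where Te: "T = (t,a,b,Q1,Q2,e1,h1,h2)" by (cases T) auto
    show ?thesis
    proof (cases "stc N t a b \<and> Q1 + Q2 = P \<and> B (Q2 + b) (e - e1) h2 \<noteq> 0")
      case True
      then have "momentum (Q2 + b) = 0" using assms(1) unfolding fixmom_def by blast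
      moreover have "momentum a + momentum b = 0" using True stc_mom by blast
      moreover have "momentum Q1 + momentum Q2 = momentum P" using True momentum_add by metis
      ultimately have "momentum (Q1 + a) = momentum P" by (simp add: momentum_add)
      then have "A (Q1 + a) = A' (Q1 + a)" using assms(2) by blast
      then show ?thesis unfolding Te stt_def by simp
    next
      case False
      then show ?thesis unfolding Te stt_def by auto
    qed
  qed
  then have "stt N etainv A B P e h = stt N etainv A' B P e h" by (rule ext)
  then show ?thesis by (simp add: star_stt)
qed

lemma star_local_right:
  assumes "fixmom 0 B" "\<forall>Q e h. momentum Q = momentum P \<longrightarrow> A Q e h = A' Q e h"
  shows "star N etainv B A P e h = star N etainv B A' P e h"
proof -
  have "stt N etainv B A P e h T = stt N etainv B A' P e h T" for T
  proof -
    obtain t a b Q1 Q2 e1 h1 h2 where Te: "T = (t,a,b,Q1,Q2,e1,h1,h2)" by (cases T) auto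
    show ?thesis
    proof (cases "stc N t a b \<and> Q1 + Q2 = P \<and> B (Q1 + a) e1 h1 \<noteq> 0")
      case True
      then have "momentum (Q1 + a) = 0" using assms(1) unfolding fixmom_def by blast
      moreover have "momentum a + momentum b = 0" using True stc_mom by blast
      moreover have "momentum Q1 + momentum Q2 = momentum P" using True momentum_add by metis
      ultimately have "momentum (Q2 + b) = momentum P" by (simp add: momentum_add)
      then have "A (Q2 + b) = A' (Q2 + b)" using assms(2) by blast
      then show ?thesis unfolding Te stt_def by simp
    next
      case False
      then show ?thesis unfolding Te stt_def by auto
    qed
  qed
  then have "stt N etainv B A P e h = stt N etainv B A' P e h" by (rule ext)
  then show ?thesis by (simp add: star_stt)
qed

definition Dy :: "nat \<times> int \<Rightarrow> pser \<Rightarrow> pser" where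
  "Dy y A = (\<lambda>Q e h. of_nat (Poly_Mapping.lookup Q y + 1) * A (Q + Poly_Mapping.single y 1) e h)"

lemma fixmom_Dy:
  assumes "fixmom m A" shows "fixmom (m - snd y) (Dy y A)"
  unfolding fixmom_def
proof (intro allI impI)
  fix Q e h assume "Dy y A Q e h \<noteq> 0"
  then have "A (Q + Poly_Mapping.single y 1) e h \<noteq> 0" unfolding Dy_def by auto
  then have "momentum (Q + Poly_Mapping.single y 1) = m" using assms unfolding fixmom_def by blast
  then show "momentum Q = m - snd y" by (simp only: momentum_add momentum_single)
qed

definition sh1 :: "nat \<times> int \<Rightarrow> stup \<Rightarrow> stup" where
  "sh1 y = (\<lambda>(t,a,b,Q1,Q2,e1,h1,h2). (t,a,b,Q1 + Poly_Mapping.single y 1,Q2,e1,h1,h2))"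
definition sh2 :: "nat \<times> int \<Rightarrow> stup \<Rightarrow> stup" where
  "sh2 y = (\<lambda>(t,a,b,Q1,Q2,e1,h1,h2). (t,a,b,Q1,Q2 + Poly_Mapping.single y 1,e1,h1,h2))"
definition w1 :: "nat \<times> int \<Rightarrow> stup \<Rightarrow> complex" where
  "w1 y = (\<lambda>(t,a,b,Q1,Q2,e1,h1,h2). of_nat (Poly_Mapping.lookup Q1 y))"
definition w2 :: "nat \<times> int \<Rightarrow> stup \<Rightarrow> complex" where
  "w2 y = (\<lambda>(t,a,b,Q1,Q2,e1,h1,h2). of_nat (Poly_Mapping.lookup Q2 y))"

lemma add_single_cancel: "(Q1 + Poly_Mapping.single y (1::nat) + Q2 = P + Poly_Mapping.single y 1) \<longleftrightarrow> Q1 + Q2 = P"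
  by (metis add.commute add.left_commute add_right_cancel)

lemma add_single_cancel2: "(Q1 + (Q2 + Poly_Mapping.single y (1::nat)) = P + Poly_Mapping.single y 1) \<longleftrightarrow> Q1 + Q2 = P"
  by (metis add.assoc add_right_cancel)

lemma fld1: "(c1::complex) \<noteq> 0 \<Longrightarrow> d1 \<noteq> 0 \<Longrightarrow> c1 * (s * (v * (c2 * p) / (c1 * d1)) * bp) = s * ((c2 * v) * p / d1) * bp"
  by (simp add: field_simps)

lemma mult_if0: "(c::complex) * (if b then x else 0) = (if b then c * x else 0)" by simp

lemma leib_pt1:
  "w1 y (sh1 y T) * stt N etainv A B (P + Poly_Mapping.single y 1) e h (sh1 y T) = stt N etainv (Dy y A) B P e h T"
proof -
  obtain t a b Q1 Q2 e1 h1 h2 where Te: "T = (t,a,b,Q1,Q2,e1,h1,h2)" by (cases T) auto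
  let ?e = "Poly_Mapping.single y (1::nat)"
  have c: "(Q1 + ?e + Q2 = P + ?e) = (Q1 + Q2 = P)" by (rule add_single_cancel)
  have a1: "Q1 + ?e + a = Q1 + a + ?e" by (simp add: add_ac)
  have p1: "pfact (Q1 + a + ?e) = of_nat (Poly_Mapping.lookup (Q1 + a) y + 1) * pfact (Q1 + a)"
    by (rule pfact_add_single)
  have p2: "pfact (Q1 + ?e) = of_nat (Poly_Mapping.lookup Q1 y + 1) * pfact Q1" by (rule pfact_add_single)
  have l1: "Poly_Mapping.lookup (Q1 + ?e) y = Poly_Mapping.lookup Q1 y + 1" by (simp add: lookup_add)
  have nz: "(of_nat (Poly_Mapping.lookup Q1 y + 1) :: complex) \<noteq> 0" by (simp only: of_nat_eq_0_iff)
  have L: "w1 y (sh1 y T) * stt N etainv A B (P + ?e) e h (sh1 y T) =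
     (if stc N t a b \<and> Q1 + Q2 = P \<and> e1 \<le> e \<and> h1 + h2 + tsz t = h
     then of_nat (Poly_Mapping.lookup Q1 y + 1) * (stw etainv t * (A (Q1 + a + ?e) e1 h1 * (of_nat (Poly_Mapping.lookup (Q1 + a) y + 1) * pfact (Q1 + a)) / (of_nat (Poly_Mapping.lookup Q1 y + 1) * pfact Q1)) *
           (B (Q2 + b) (e - e1) h2 * pfact (Q2 + b) / pfact Q2))
     else 0)"
    unfolding Te sh1_def w1_def stt_def
    by (simp only: prod.case c a1 p1 p2 l1)
      (simp only: mult_if0)
  have R: "stt N etainv (Dy y A) B P e h T =
     (if stc N t a b \<and> Q1 + Q2 = P \<and> e1 \<le> e \<and> h1 + h2 + tsz t = h
     then stw etainv t * ((of_nat (Poly_Mapping.lookup (Q1 + a) y + 1) * A (Q1 + a + ?e) e1 h1) * pfact (Q1 + a) / pfact Q1) *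
           (B (Q2 + b) (e - e1) h2 * pfact (Q2 + b) / pfact Q2)
     else 0)"
    unfolding Te stt_def Dy_def by (simp only: prod.case)
  show ?thesis unfolding L R by (simp only: fld1[OF nz pfact_nonzero])
qed

lemma fld2: "(c1::complex) \<noteq> 0 \<Longrightarrow> d1 \<noteq> 0 \<Longrightarrow> c1 * (s * ap * (v * (c2 * p) / (c1 * d1))) = s * ap * ((c2 * v) * p / d1)"
  by (simp add: field_simps)

lemma leib_pt2:
  "w2 y (sh2 y T) * stt N etainv A B (P + Poly_Mapping.single y 1) e h (sh2 y T) = stt N etainv A (Dy y B) P e h T"
proof -
  obtain t a b Q1 Q2 e1 h1 h2 where Te: "T = (t,a,b,Q1,Q2,e1,h1,h2)" by (cases T) auto
  let ?e = "Poly_Mapping.single y (1::nat)"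
  have c: "(Q1 + (Q2 + ?e) = P + ?e) = (Q1 + Q2 = P)" by (rule add_single_cancel2)
  have a1: "Q2 + ?e + b = Q2 + b + ?e" by (simp add: add_ac)
  have p1: "pfact (Q2 + b + ?e) = of_nat (Poly_Mapping.lookup (Q2 + b) y + 1) * pfact (Q2 + b)"
    by (rule pfact_add_single)
  have p2: "pfact (Q2 + ?e) = of_nat (Poly_Mapping.lookup Q2 y + 1) * pfact Q2" by (rule pfact_add_single)
  have l1: "Poly_Mapping.lookup (Q2 + ?e) y = Poly_Mapping.lookup Q2 y + 1" by (simp add: lookup_add)
  have nz: "(of_nat (Poly_Mapping.lookup Q2 y + 1) :: complex) \<noteq> 0" by (simp only: of_nat_eq_0_iff)
  have L: "w2 y (sh2 y T) * stt N etainv A B (P + ?e) e h (sh2 y T) =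
     (if stc N t a b \<and> Q1 + Q2 = P \<and> e1 \<le> e \<and> h1 + h2 + tsz t = h
     then of_nat (Poly_Mapping.lookup Q2 y + 1) * (stw etainv t * (A (Q1 + a) e1 h1 * pfact (Q1 + a) / pfact Q1) *
           (B (Q2 + b + ?e) (e - e1) h2 * (of_nat (Poly_Mapping.lookup (Q2 + b) y + 1) * pfact (Q2 + b)) / (of_nat (Poly_Mapping.lookup Q2 y + 1) * pfact Q2)))
     else 0)"
    unfolding Te sh2_def w2_def stt_def
    by (simp only: prod.case c a1 p1 p2 l1) (simp only: mult_if0)
  have R: "stt N etainv A (Dy y B) P e h T =
     (if stc N t a b \<and> Q1 + Q2 = P \<and> e1 \<le> e \<and> h1 + h2 + tsz t = h
     then stw etainv t * (A (Q1 + a) e1 h1 * pfact (Q1 + a) / pfact Q1) *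
           ((of_nat (Poly_Mapping.lookup (Q2 + b) y + 1) * B (Q2 + b + ?e) (e - e1) h2) * pfact (Q2 + b) / pfact Q2)
     else 0)"
    unfolding Te stt_def Dy_def by (simp only: prod.case)
  show ?thesis unfolding L R by (simp only: fld2[OF nz pfact_nonzero])
qed

lemma w_split:
  assumes "stt N etainv A B (P + Poly_Mapping.single y 1) e h T \<noteq> 0"
  shows "of_nat (Poly_Mapping.lookup P y + 1) = w1 y T + w2 y T"
proof -
  obtain t a b Q1 Q2 e1 h1 h2 where Te: "T = (t,a,b,Q1,Q2,e1,h1,h2)" by (cases T) auto
  have "Q1 + Q2 = P + Poly_Mapping.single y 1" using stt_nz(2) assms Te by blast
  then have "Poly_Mapping.lookup Q1 y + Poly_Mapping.lookup Q2 y = Poly_Mapping.lookup P y + 1"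
    by (metis lookup_add lookup_single_eq)
  then show ?thesis unfolding Te w1_def w2_def by (simp only: prod.case) (metis of_nat_add)
qed

lemma inj_sh1: "inj (sh1 y)"
  by (rule injI) (auto simp: sh1_def split: prod.splits)

lemma inj_sh2: "inj (sh2 y)"
  by (rule injI) (auto simp: sh2_def split: prod.splits)

lemma range_sh1: "w1 y T \<noteq> 0 \<Longrightarrow> T \<in> range (sh1 y)"
proof -
  assume a: "w1 y T \<noteq> 0"
  obtain t a b Q1 Q2 e1 h1 h2 where Te: "T = (t,a,b,Q1,Q2,e1,h1,h2)" by (cases T) auto
  have "Poly_Mapping.lookup Q1 y \<noteq> 0" using a unfolding Te w1_def by simp
  then have "Q1 = (Q1 - Poly_Mapping.single y 1) + Poly_Mapping.single y 1"
    by (intro poly_mapping_eqI) (auto simp: lookup_add lookup_minus lookup_single when_def)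
  then have "T = sh1 y (t,a,b,Q1 - Poly_Mapping.single y 1,Q2,e1,h1,h2)" unfolding Te sh1_def by simp
  then show ?thesis by blast
qed

lemma range_sh2: "w2 y T \<noteq> 0 \<Longrightarrow> T \<in> range (sh2 y)"
proof -
  assume a: "w2 y T \<noteq> 0"
  obtain t a b Q1 Q2 e1 h1 h2 where Te: "T = (t,a,b,Q1,Q2,e1,h1,h2)" by (cases T) auto
  have "Poly_Mapping.lookup Q2 y \<noteq> 0" using a unfolding Te w2_def by simp
  then have "Q2 = (Q2 - Poly_Mapping.single y 1) + Poly_Mapping.single y 1"
    by (intro poly_mapping_eqI) (auto simp: lookup_add lookup_minus lookup_single when_def)
  then have "T = sh2 y (t,a,b,Q1,Q2 - Poly_Mapping.single y 1,e1,h1,h2)" unfolding Te sh2_def by simp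
  then show ?thesis by blast
qed

lemma star_leibniz:
  assumes "fixmom mA A"
  shows "Dy y (star N etainv A B) P e h = star N etainv (Dy y A) B P e h + star N etainv A (Dy y B) P e h"
proof -
  let ?P' = "P + Poly_Mapping.single y 1"
  let ?g = "stt N etainv A B ?P' e h"
  have fin: "finite {T. ?g T \<noteq> 0}" by (rule stt_finite_A[OF assms])
  have f1: "finite {T. w1 y T * ?g T \<noteq> 0}" by (rule finite_subset[OF _ fin]) auto
  have f2: "finite {T. w2 y T * ?g T \<noteq> 0}" by (rule finite_subset[OF _ fin]) auto
  have "Dy y (star N etainv A B) P e h = of_nat (Poly_Mapping.lookup P y + 1) * fsum ?g"
    unfolding Dy_def by (simp only: star_stt)
  also have "\<dots> = fsum (\<lambda>T. of_nat (Poly_Mapping.lookup P y + 1) * ?g T)" by (rule fsum_cmult[symmetric])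
  also have "\<dots> = fsum (\<lambda>T. w1 y T * ?g T + w2 y T * ?g T)"
  proof -
    have "of_nat (Poly_Mapping.lookup P y + 1) * ?g T = w1 y T * ?g T + w2 y T * ?g T" for T
    proof (cases "?g T = 0")
      case True then show ?thesis by simp
    next
      case False then show ?thesis using w_split[OF False] by (simp add: distrib_right)
    qed
    then show ?thesis by presburger
  qed
  also have "\<dots> = fsum (\<lambda>T. w1 y T * ?g T) + fsum (\<lambda>T. w2 y T * ?g T)"
    by (rule fsum_add[OF f1 f2])
  also have "fsum (\<lambda>T. w1 y T * ?g T) = fsum (\<lambda>T. w1 y (sh1 y T) * ?g (sh1 y T))"
    by (rule fsum_reindex[symmetric, OF inj_sh1]) (auto intro: range_sh1)
  also have "\<dots> = star N etainv (Dy y A) B P e h"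
    by (simp only: leib_pt1 star_stt)
  also have "fsum (\<lambda>T. w2 y T * ?g T) = fsum (\<lambda>T. w2 y (sh2 y T) * ?g (sh2 y T))"
    by (rule fsum_reindex[symmetric, OF inj_sh2]) (auto intro: range_sh2)
  also have "\<dots> = star N etainv A (Dy y B) P e h"
    by (simp only: leib_pt2 star_stt)
  finally show ?thesis .
qed



type_synonym cmon = "(nat \<times> nat \<times> int) \<Rightarrow>\<^sub>0 nat"

definition mg1 :: "cmon \<Rightarrow> nat \<Rightarrow> nat \<Rightarrow> nat" where
  "mg1 c a j = (\<Sum>k\<in>{k. (a,j,k) \<in> Poly_Mapping.keys c}. Poly_Mapping.lookup c (a,j,k))"
definition mg2 :: "cmon \<Rightarrow> nat \<Rightarrow> int \<Rightarrow> nat" where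
  "mg2 c a k = (\<Sum>j\<in>{j. (a,j,k) \<in> Poly_Mapping.keys c}. Poly_Mapping.lookup c (a,j,k))"

definition fcond :: "umon \<Rightarrow> cmon \<Rightarrow> pmon \<Rightarrow> bool" where
  "fcond m c P \<longleftrightarrow> (\<forall>a j. Poly_Mapping.lookup m (a,j) = mg1 c a j) \<and> (\<forall>a k. Poly_Mapping.lookup P (a,k) = mg2 c a k)"

definition wv :: "nat \<times> nat \<times> int \<Rightarrow> complex" where
  "wv x = (case x of (a,j,k) \<Rightarrow> (\<i> * of_int k) ^ j)"

definition WW :: "umon \<Rightarrow> cmon \<Rightarrow> complex" where
  "WW m c = pfact m / pfact c * (\<Prod>x\<in>Poly_Mapping.keys c. wv x ^ Poly_Mapping.lookup c x)"

definition fterm :: "qdp \<Rightarrow> pmon \<Rightarrow> nat \<Rightarrow> nat \<Rightarrow> umon \<times> cmon \<Rightarrow> complex" where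
  "fterm f P e h = (\<lambda>(m,c). if fcond m c P then f m e h * WW m c else 0)"

lemma fourier_ft: "fourier f P e h = fsum (fterm f P e h)"
proof -
  have eq: "(\<Prod>x\<in>Poly_Mapping.keys c. (case x of (a,j,k) \<Rightarrow> (\<i> * of_int k) ^ (j * Poly_Mapping.lookup c x)))
      = (\<Prod>x\<in>Poly_Mapping.keys c. wv x ^ Poly_Mapping.lookup c x)" for c :: cmon
    by (rule prod.cong) (auto simp: wv_def power_mult split: prod.splits)
  show ?thesis
    unfolding fourier_def fterm_def fcond_def WW_def mg1_def mg2_def eq
    by (simp only: times_divide_eq_left times_divide_eq_right mult.assoc)
qed

lemma finite_Kj: "finite {j. (a,j,k) \<in> Poly_Mapping.keys (c::cmon)}"
  by (rule finite_subset[of _ "(\<lambda>x. fst (snd x)) ` Poly_Mapping.keys c"]) (force, simp)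

lemma finite_Kk: "finite {k. (a,j,k) \<in> Poly_Mapping.keys (c::cmon)}"
  by (rule finite_subset[of _ "(\<lambda>x. snd (snd x)) ` Poly_Mapping.keys c"]) (force, simp)

lemma mg1_super: "finite S \<Longrightarrow> {k. (a,j,k) \<in> Poly_Mapping.keys c} \<subseteq> S \<Longrightarrow>
   mg1 c a j = (\<Sum>k\<in>S. Poly_Mapping.lookup c (a,j,k))"
  unfolding mg1_def by (rule sum.mono_neutral_left) (auto simp: in_keys_iff)

lemma mg2_super: "finite S \<Longrightarrow> {j. (a,j,k) \<in> Poly_Mapping.keys c} \<subseteq> S \<Longrightarrow>
   mg2 c a k = (\<Sum>j\<in>S. Poly_Mapping.lookup c (a,j,k))"
  unfolding mg2_def by (rule sum.mono_neutral_left) (auto simp: in_keys_iff)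

lemma mg1_ge: "Poly_Mapping.lookup c (a,j,k) \<le> mg1 c a j"
proof (cases "(a,j,k) \<in> Poly_Mapping.keys c")
  case True then show ?thesis unfolding mg1_def by (intro member_le_sum finite_Kk) auto
next
  case False then show ?thesis by (simp add: in_keys_iff)
qed

lemma mg2_ge: "Poly_Mapping.lookup c (a,j,k) \<le> mg2 c a k"
proof (cases "(a,j,k) \<in> Poly_Mapping.keys c")
  case True then show ?thesis unfolding mg2_def by (intro member_le_sum finite_Kj) auto
next
  case False then show ?thesis by (simp add: in_keys_iff)
qed

lemma mg1_add_single: "mg1 (c + Poly_Mapping.single y 1) a j = mg1 c a j + (if (a,j) = (fst y, fst (snd y)) then 1 else 0)"
proof -
  obtain a0 j0 k0 where ye: "y = (a0,j0,k0)" by (cases y) auto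
  let ?S = "insert k0 {k. (a,j,k) \<in> Poly_Mapping.keys c}"
  have fS: "finite ?S" using finite_Kk by simp
  have "mg1 (c + Poly_Mapping.single y 1) a j = (\<Sum>k\<in>?S. Poly_Mapping.lookup (c + Poly_Mapping.single y 1) (a,j,k))"
    by (rule mg1_super[OF fS]) (auto simp: ye)
  also have "\<dots> = (\<Sum>k\<in>?S. Poly_Mapping.lookup c (a,j,k)) + (\<Sum>k\<in>?S. if (a,j,k) = y then 1 else 0)"
    by (simp only: lookup_add_single sum.distrib)
  also have "(\<Sum>k\<in>?S. Poly_Mapping.lookup c (a,j,k)) = mg1 c a j"
    by (rule mg1_super[symmetric, OF fS]) auto
  also have "(\<Sum>k\<in>?S. if (a,j,k) = y then 1 else 0) = (if (a,j) = (fst y, fst (snd y)) then 1 else (0::nat))"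
  proof (cases "(a,j) = (a0,j0)")
    case True
    then have "(\<Sum>k\<in>?S. if (a,j,k) = y then 1 else (0::nat)) = (\<Sum>k\<in>?S. if k = k0 then 1 else 0)"
      by (intro sum.cong) (auto simp: ye)
    also have "\<dots> = 1" using fS by simp
    finally show ?thesis using True ye by simp
  next
    case False
    then have "(\<Sum>k\<in>?S. if (a,j,k) = y then 1 else (0::nat)) = (\<Sum>k\<in>?S. 0)"
      by (intro sum.cong) (auto simp: ye)
    then show ?thesis using False ye by simp
  qed
  finally show ?thesis .
qed

lemma mg2_add_single: "mg2 (c + Poly_Mapping.single y 1) a k = mg2 c a k + (if (a,k) = (fst y, snd (snd y)) then 1 else 0)"
proof -
  obtain a0 j0 k0 where ye: "y = (a0,j0,k0)" by (cases y) auto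
  let ?S = "insert j0 {j. (a,j,k) \<in> Poly_Mapping.keys c}"
  have fS: "finite ?S" using finite_Kj by simp
  have "mg2 (c + Poly_Mapping.single y 1) a k = (\<Sum>j\<in>?S. Poly_Mapping.lookup (c + Poly_Mapping.single y 1) (a,j,k))"
    by (rule mg2_super[OF fS]) (auto simp: ye)
  also have "\<dots> = (\<Sum>j\<in>?S. Poly_Mapping.lookup c (a,j,k)) + (\<Sum>j\<in>?S. if (a,j,k) = y then 1 else 0)"
    by (simp only: lookup_add_single sum.distrib)
  also have "(\<Sum>j\<in>?S. Poly_Mapping.lookup c (a,j,k)) = mg2 c a k"
    by (rule mg2_super[symmetric, OF fS]) auto
  also have "(\<Sum>j\<in>?S. if (a,j,k) = y then 1 else 0) = (if (a,k) = (fst y, snd (snd y)) then 1 else (0::nat))"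
  proof (cases "(a,k) = (a0,k0)")
    case True
    then have "(\<Sum>j\<in>?S. if (a,j,k) = y then 1 else (0::nat)) = (\<Sum>j\<in>?S. if j = j0 then 1 else 0)"
      by (intro sum.cong) (auto simp: ye)
    also have "\<dots> = 1" using fS by simp
    finally show ?thesis using True ye by simp
  next
    case False
    then have "(\<Sum>j\<in>?S. if (a,j,k) = y then 1 else (0::nat)) = (\<Sum>j\<in>?S. 0)"
      by (intro sum.cong) (auto simp: ye)
    then show ?thesis using False ye by simp
  qed
  finally show ?thesis .
qed

definition fm :: "cmon \<Rightarrow> umon" where
  "fm c = (THE m. \<forall>a j. Poly_Mapping.lookup m (a,j) = mg1 c a j)"

lemma fcond_fm: "fcond m c P \<Longrightarrow> m = fm c"
  unfolding fm_def fcond_def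
  by (rule the_equality[symmetric]) (auto intro!: poly_mapping_eqI)

definition pmax :: "pmon \<Rightarrow> nat" where
  "pmax P = Max (insert 0 (Poly_Mapping.lookup P ` Poly_Mapping.keys P))"

lemma pmax_ge: "Poly_Mapping.lookup P x \<le> pmax P"
  unfolding pmax_def by (cases "x \<in> Poly_Mapping.keys P") (auto simp: in_keys_iff)

lemma fcond_c_le:
  assumes "fcond m c P"
  shows "Poly_Mapping.lookup c (a,j,k) \<le> Poly_Mapping.lookup P (a,k)"
    "Poly_Mapping.lookup c (a,j,k) \<le> Poly_Mapping.lookup m (a,j)"
  using assms mg1_ge mg2_ge unfolding fcond_def by metis+

lemma FB_finite: "finite {(m,c). fcond m c P \<and> (\<forall>x\<in>Poly_Mapping.keys m. snd x \<le> I)}"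
proof -
  let ?KS = "(\<lambda>((a,k),j). (a,j,k)) ` (Poly_Mapping.keys P \<times> {..I})"
  let ?C = "{c :: cmon. Poly_Mapping.keys c \<subseteq> ?KS \<and> (\<forall>x. Poly_Mapping.lookup c x \<le> pmax P)}"
  have fC: "finite ?C" by (rule finite_pm) simp
  have "{(m,c). fcond m c P \<and> (\<forall>x\<in>Poly_Mapping.keys m. snd x \<le> I)} \<subseteq> (\<lambda>c. (fm c, c)) ` ?C"
  proof
    fix z assume "z \<in> {(m,c). fcond m c P \<and> (\<forall>x\<in>Poly_Mapping.keys m. snd x \<le> I)}"
    then obtain m c where ze: "z = (m,c)" and fc: "fcond m c P" and km: "\<forall>x\<in>Poly_Mapping.keys m. snd x \<le> I"
      by auto
    have kc: "Poly_Mapping.keys c \<subseteq> ?KS"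
    proof
      fix x assume x: "x \<in> Poly_Mapping.keys c"
      obtain a j k where xe: "x = (a,j,k)" by (cases x) auto
      have nz: "Poly_Mapping.lookup c (a,j,k) \<noteq> 0" using x xe by (simp add: in_keys_iff)
      have "Poly_Mapping.lookup P (a,k) \<noteq> 0" using fcond_c_le(1)[OF fc, of a j k] nz by linarith
      then have "(a,k) \<in> Poly_Mapping.keys P" by (simp add: in_keys_iff)
      moreover have "Poly_Mapping.lookup m (a,j) \<noteq> 0" using fcond_c_le(2)[OF fc, of a j k] nz by linarith
      then have "(a,j) \<in> Poly_Mapping.keys m" by (simp add: in_keys_iff)
      then have "j \<le> I" using km by fastforce
      ultimately show "x \<in> ?KS" unfolding xe by (auto intro!: image_eqI[where x="((a,k),j)"])
    qed
    have vc: "\<forall>x. Poly_Mapping.lookup c x \<le> pmax P"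
    proof
      fix x :: "nat \<times> nat \<times> int" obtain a j k where xe: "x = (a,j,k)" by (cases x) auto
      show "Poly_Mapping.lookup c x \<le> pmax P" unfolding xe
        using fcond_c_le(1)[OF fc, of a j k] pmax_ge[of P "(a,k)"] by linarith
    qed
    have "z = (fm c, c)" using ze fcond_fm[OF fc] by simp
    then show "z \<in> (\<lambda>c. (fm c, c)) ` ?C" using kc vc by blast
  qed
  then show ?thesis by (rule finite_subset) (rule finite_imageI[OF fC])
qed

lemma FB_finite_sub:
  assumes "\<And>m c. F (m,c) \<noteq> 0 \<Longrightarrow> fcond m c P \<and> (\<forall>x\<in>Poly_Mapping.keys m. snd x \<le> I)"
  shows "finite {z. F z \<noteq> 0}"
  by (rule finite_subset[OF _ FB_finite[of P I]]) (use assms in auto)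

lemma fcond_shift:
  "fcond (m + Poly_Mapping.single (a0,j0) 1) (c + Poly_Mapping.single (a0,j0,k0) 1) (P + Poly_Mapping.single (a0,k0) 1) \<longleftrightarrow> fcond m c P"
  unfolding fcond_def by (simp only: mg1_add_single mg2_add_single lookup_add_single) simp

lemma WW_shift:
  "WW (m + Poly_Mapping.single (a0,j0) 1) (c + Poly_Mapping.single (a0,j0,k0) 1) =
    of_nat (Poly_Mapping.lookup m (a0,j0) + 1) * pfact m / (of_nat (Poly_Mapping.lookup c (a0,j0,k0) + 1) * pfact c)
    * (wv (a0,j0,k0) * (\<Prod>x\<in>Poly_Mapping.keys c. wv x ^ Poly_Mapping.lookup c x))"
  unfolding WW_def by (simp only: pfact_add_single prodpow_add_single)

lemma fld3: "(c1::complex) \<noteq> 0 \<Longrightarrow> pc \<noteq> 0 \<Longrightarrow>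
   c1 * (f * (m1 * pm / (c1 * pc) * (w * Pi))) = w * (m1 * f * (pm / pc * Pi))"
  by (simp add: field_simps)

definition phi :: "nat \<Rightarrow> nat \<Rightarrow> int \<Rightarrow> umon \<times> cmon \<Rightarrow> umon \<times> cmon" where
  "phi mu j l = (\<lambda>(m,c). (m + Poly_Mapping.single (mu,j) 1, c + Poly_Mapping.single (mu,j,l) 1))"

lemma inj_phi: "inj (phi mu j l)"
  by (rule injI) (auto simp: phi_def split: prod.splits)

lemma pm_decomp: "Poly_Mapping.lookup m x \<noteq> 0 \<Longrightarrow> m = (m - Poly_Mapping.single x 1) + Poly_Mapping.single x (1::nat)"
  by (intro poly_mapping_eqI) (auto simp: lookup_add lookup_minus lookup_single when_def)

lemma du_pt:
  "of_nat (Poly_Mapping.lookup (snd (phi mu j l z)) (mu,j,l)) * fterm f (P + Poly_Mapping.single (mu,l) 1) e h (phi mu j l z)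
    = (\<i> * of_int l) ^ j * fterm (du mu j f) P e h z"
proof -
  obtain m c where ze: "z = (m,c)" by (cases z) auto
  have nz: "(of_nat (Poly_Mapping.lookup c (mu,j,l) + 1) :: complex) \<noteq> 0" by (simp only: of_nat_eq_0_iff)
  have l1: "Poly_Mapping.lookup (c + Poly_Mapping.single (mu,j,l) 1) (mu,j,l) = Poly_Mapping.lookup c (mu,j,l) + 1"
    by (simp add: lookup_add)
  show ?thesis
    unfolding ze phi_def fterm_def du_def
    apply (simp only: prod.case snd_conv fcond_shift WW_shift l1)
    apply (cases "fcond m c P")
     apply (simp only: if_True)
     apply (subst fld3[OF nz pfact_nonzero])
     apply (simp add: wv_def WW_def)
    apply simp
    done
qed

lemma fterm_nz:
  "fterm f P e h (m,c) \<noteq> 0 \<Longrightarrow> fcond m c P \<and> f m e h \<noteq> 0"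
  unfolding fterm_def by (auto split: if_splits)

lemma fterm_finite:
  assumes bnd: "\<forall>m. f m e h \<noteq> 0 \<longrightarrow> (\<forall>x\<in>Poly_Mapping.keys m. snd x \<le> I)"
  shows "finite {z. fterm f P e h z \<noteq> 0}"
  by (rule FB_finite_sub[where I=I]) (use fterm_nz bnd in blast)

lemma fourier_du:
  assumes bnd: "\<forall>m. f m e h \<noteq> 0 \<longrightarrow> (\<forall>x\<in>Poly_Mapping.keys m. snd x \<le> I)"
  shows "of_nat (Poly_Mapping.lookup P (mu,l) + 1) * fourier f (P + Poly_Mapping.single (mu,l) 1) e h
     = (\<Sum>j\<le>I. (\<i> * of_int l) ^ j * fourier (du mu j f) P e h)"
proof -
  let ?P' = "P + Poly_Mapping.single (mu,l) 1"
  let ?g = "fterm f ?P' e h"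
  let ?w = "\<lambda>j z. of_nat (Poly_Mapping.lookup (snd z) (mu,j,l)) :: complex"
  have fin: "finite {z. ?g z \<noteq> 0}" by (rule fterm_finite[where f=f and e=e and h=h, OF bnd])
  have "of_nat (Poly_Mapping.lookup P (mu,l) + 1) * fourier f ?P' e h = fsum (\<lambda>z. of_nat (Poly_Mapping.lookup P (mu,l) + 1) * ?g z)"
    by (simp only: fourier_ft fsum_cmult)
  also have "\<dots> = fsum (\<lambda>z. \<Sum>j\<le>I. ?w j z * ?g z)"
  proof -
    have "of_nat (Poly_Mapping.lookup P (mu,l) + 1) * ?g z = (\<Sum>j\<le>I. ?w j z * ?g z)" for z
    proof (cases "?g z = 0")
      case True then show ?thesis by simp
    next
      case False
      obtain m c where ze: "z = (m,c)" by (cases z) auto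
      have fc: "fcond m c ?P'" and fnz: "f m e h \<noteq> 0" using fterm_nz False ze by blast+
      have "Poly_Mapping.lookup ?P' (mu,l) = mg2 c mu l" using fc unfolding fcond_def by blast
      then have "Poly_Mapping.lookup P (mu,l) + 1 = mg2 c mu l" by (simp add: lookup_add)
      also have "\<dots> = (\<Sum>j\<le>I. Poly_Mapping.lookup c (mu,j,l))"
      proof (rule mg2_super)
        show "{j. (mu, j, l) \<in> Poly_Mapping.keys c} \<subseteq> {..I}"
        proof
          fix j assume "j \<in> {j. (mu, j, l) \<in> Poly_Mapping.keys c}"
          then have "Poly_Mapping.lookup c (mu,j,l) \<noteq> 0" by (simp add: in_keys_iff)
          then have "Poly_Mapping.lookup m (mu,j) \<noteq> 0" using fcond_c_le(2)[OF fc, of mu j l] by linarith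
          then have "(mu,j) \<in> Poly_Mapping.keys m" by (simp add: in_keys_iff)
          then show "j \<in> {..I}" using bnd fnz by fastforce
        qed
      qed simp
      finally have "(of_nat (Poly_Mapping.lookup P (mu,l) + 1) :: complex) = (\<Sum>j\<le>I. ?w j z)"
        unfolding ze by (metis of_nat_sum snd_conv)
      then show ?thesis by (simp add: sum_distrib_right)
    qed
    then show ?thesis by presburger
  qed
  also have "\<dots> = (\<Sum>j\<le>I. fsum (\<lambda>z. ?w j z * ?g z))"
    by (rule fsum_sum) (auto intro: finite_subset[OF _ fin])
  also have "\<dots> = (\<Sum>j\<le>I. (\<i> * of_int l) ^ j * fourier (du mu j f) P e h)"
  proof (rule sum.cong[OF refl])
    fix j assume "j \<in> {..I}"
    have "fsum (\<lambda>z. ?w j z * ?g z) = fsum (\<lambda>z. ?w j (phi mu j l z) * ?g (phi mu j l z))"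
    proof (rule fsum_reindex[symmetric, OF inj_phi])
      show "{z. ?w j z * ?g z \<noteq> 0} \<subseteq> range (phi mu j l)"
      proof
        fix z assume "z \<in> {z. ?w j z * ?g z \<noteq> 0}"
        then have w0: "?w j z \<noteq> 0" and g0: "?g z \<noteq> 0" by auto
        obtain m c where ze: "z = (m,c)" by (cases z) auto
        have fc: "fcond m c ?P'" using fterm_nz g0 ze by blast
        have cnz: "Poly_Mapping.lookup c (mu,j,l) \<noteq> 0" using w0 ze by simp
        then have mnz: "Poly_Mapping.lookup m (mu,j) \<noteq> 0" using fcond_c_le(2)[OF fc, of mu j l] by linarith
        have "z = phi mu j l (m - Poly_Mapping.single (mu,j) 1, c - Poly_Mapping.single (mu,j,l) 1)"
          unfolding ze phi_def using pm_decomp[OF cnz] pm_decomp[OF mnz] by simp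
        then show "z \<in> range (phi mu j l)" by blast
      qed
    qed
    also have "\<dots> = fsum (\<lambda>z. (\<i> * of_int l) ^ j * fterm (du mu j f) P e h z)"
      by (simp only: du_pt)
    also have "\<dots> = (\<i> * of_int l) ^ j * fourier (du mu j f) P e h"
      by (simp only: fsum_cmult fourier_ft)
    finally show "fsum (\<lambda>z. ?w j z * ?g z) = (\<i> * of_int l) ^ j * fourier (du mu j f) P e h" .
  qed
  finally show ?thesis .
qed



definition SL :: "cmon \<Rightarrow> (nat \<times> nat \<times> int) set" where
  "SL c = {(a,j,k). (a, Suc j, k) \<in> Poly_Mapping.keys c}"

lemma finite_SL: "finite (SL c)"
  by (rule finite_subset[of _ "(\<lambda>(a,j,k). (a, j - 1, k)) ` Poly_Mapping.keys c"])
     (auto simp: SL_def image_iff intro!: bexI[where x="(_, Suc _, _)"])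

definition LTv :: "qdp \<Rightarrow> nat \<Rightarrow> nat \<Rightarrow> umon \<Rightarrow> cmon \<Rightarrow> nat \<times> nat \<times> int \<Rightarrow> complex" where
  "LTv g e h m c y = (case y of (a,j,k) \<Rightarrow>
     of_nat (Poly_Mapping.lookup c (a, Suc j, k)) / of_nat (Poly_Mapping.lookup m (a, Suc j)) *
     (of_nat (Poly_Mapping.lookup m (a,j) + 1) *
      g (m - Poly_Mapping.single (a, Suc j) 1 + Poly_Mapping.single (a,j) 1) e h))"

lemma dx_expand:
  assumes fc: "fcond m c P"
  shows "dx g m e h = (\<Sum>y\<in>SL c. LTv g e h m c y)"
proof -
  let ?D = "{(a,k). (a, Suc k) \<in> Poly_Mapping.keys m}"
  let ?X = "\<lambda>x. of_nat (Poly_Mapping.lookup m x + 1) *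
      g (m - Poly_Mapping.single (fst x, Suc (snd x)) 1 + Poly_Mapping.single x 1) e h"
  let ?K = "\<lambda>x. {k. (fst x, Suc (snd x), k) \<in> Poly_Mapping.keys c}"
  let ?F = "\<lambda>x k. of_nat (Poly_Mapping.lookup c (fst x, Suc (snd x), k)) / of_nat (Poly_Mapping.lookup m (fst x, Suc (snd x))) * ?X x"
  have fD: "finite ?D"
    by (rule finite_subset[of _ "(\<lambda>(a,k). (a, k - 1)) ` Poly_Mapping.keys m"])
       (auto simp: image_iff intro!: bexI[where x="(_, Suc _)"])
  have "dx g m e h = (\<Sum>x\<in>?D. ?X x)" unfolding dx_def by simp
  also have "\<dots> = (\<Sum>x\<in>?D. \<Sum>k\<in>?K x. ?F x k)"
  proof (rule sum.cong[OF refl])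
    fix x assume x: "x \<in> ?D"
    obtain a j where xe: "x = (a,j)" by (cases x) auto
    have mnz: "Poly_Mapping.lookup m (a, Suc j) \<noteq> 0" using x xe by (simp add: in_keys_iff)
    have "Poly_Mapping.lookup m (a, Suc j) = mg1 c a (Suc j)" using fc unfolding fcond_def by blast
    also have "\<dots> = (\<Sum>k\<in>?K x. Poly_Mapping.lookup c (a, Suc j, k))" unfolding mg1_def xe by simp
    finally have meq: "(of_nat (Poly_Mapping.lookup m (a, Suc j)) :: complex) = (\<Sum>k\<in>?K x. of_nat (Poly_Mapping.lookup c (a, Suc j, k)))"
      by simp
    have "(\<Sum>k\<in>?K x. ?F x k) = (\<Sum>k\<in>?K x. of_nat (Poly_Mapping.lookup c (a, Suc j, k))) / of_nat (Poly_Mapping.lookup m (a, Suc j)) * ?X x"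
      unfolding xe by (simp add: sum_distrib_right sum_divide_distrib)
    also have "\<dots> = ?X x" using mnz by (simp only: meq[symmetric]) simp
    finally show "?X x = (\<Sum>k\<in>?K x. ?F x k)" by simp
  qed
  also have "\<dots> = (\<Sum>(x,k)\<in>Sigma ?D ?K. ?F x k)"
    by (rule sum.Sigma[OF fD]) (auto intro: finite_Kk)
  also have "\<dots> = (\<Sum>y\<in>SL c. LTv g e h m c y)"
  proof (rule sum.reindex_bij_witness[where i="\<lambda>(a,j,k). ((a,j),k)" and j="\<lambda>((a,j),k). (a,j,k)"], goal_cases)
    case (1 z)
    then show ?case by (auto split: prod.splits)
  next
    case (2 z)
    then show ?case by (auto simp: SL_def split: prod.splits)
  next
    case (3 y)
    then show ?case by (auto split: prod.splits)
  next
    case (4 y)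
    obtain a j k where ye: "y = (a,j,k)" by (cases y) auto
    have cnz: "Poly_Mapping.lookup c (a, Suc j, k) \<noteq> 0" using 4 ye by (simp add: SL_def in_keys_iff)
    have "Poly_Mapping.lookup m (a, Suc j) \<noteq> 0" using fcond_c_le(2)[OF fc, of a "Suc j" k] cnz by linarith
    then show ?case using cnz ye by (simp add: in_keys_iff)
  next
    case (5 z)
    then show ?case by (auto simp: LTv_def split: prod.splits)
  qed
  finally show ?thesis .
qed

lemma fcond_mom:
  assumes fc: "fcond m c P"
  shows "momentum P = (\<Sum>y\<in>Poly_Mapping.keys c. snd (snd y) * int (Poly_Mapping.lookup c y))"
proof -
  let ?pi = "\<lambda>y::nat \<times> nat \<times> int. (fst y, snd (snd y))"
  have lp: "Poly_Mapping.lookup P (a,k) = mg2 c a k" for a k using fc unfolding fcond_def by blast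
  have kP: "Poly_Mapping.keys P \<subseteq> ?pi ` Poly_Mapping.keys c"
  proof
    fix s assume s: "s \<in> Poly_Mapping.keys P"
    obtain a k where se: "s = (a,k)" by (cases s) auto
    have "mg2 c a k \<noteq> 0" using s se lp by (simp add: in_keys_iff)
    then obtain j where "j \<in> {j. (a,j,k) \<in> Poly_Mapping.keys c}" unfolding mg2_def
      by (meson sum.neutral)
    then show "s \<in> ?pi ` Poly_Mapping.keys c" using se by (auto intro!: image_eqI[where x="(a,j,k)"])
  qed
  have "momentum P = (\<Sum>s\<in>?pi ` Poly_Mapping.keys c. snd s * int (Poly_Mapping.lookup P s))"
    by (rule momentum_super[OF _ kP]) simp
  also have "\<dots> = (\<Sum>s\<in>?pi ` Poly_Mapping.keys c. \<Sum>y\<in>{y\<in>Poly_Mapping.keys c. ?pi y = s}. snd (snd y) * int (Poly_Mapping.lookup c y))"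
  proof (rule sum.cong[OF refl])
    fix s assume "s \<in> ?pi ` Poly_Mapping.keys c"
    obtain a k where se: "s = (a,k)" by (cases s) auto
    have "{y\<in>Poly_Mapping.keys c. ?pi y = s} = (\<lambda>j. (a,j,k)) ` {j. (a,j,k) \<in> Poly_Mapping.keys c}"
      using se by auto
    then have "(\<Sum>y\<in>{y\<in>Poly_Mapping.keys c. ?pi y = s}. snd (snd y) * int (Poly_Mapping.lookup c y))
       = (\<Sum>j\<in>{j. (a,j,k) \<in> Poly_Mapping.keys c}. k * int (Poly_Mapping.lookup c (a,j,k)))"
      by (simp add: sum.reindex inj_on_def)
    also have "\<dots> = k * int (mg2 c a k)" unfolding mg2_def by (simp add: sum_distrib_left)
    finally show "snd s * int (Poly_Mapping.lookup P s) = (\<Sum>y\<in>{y\<in>Poly_Mapping.keys c. ?pi y = s}. snd (snd y) * int (Poly_Mapping.lookup c y))"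
      using se lp by simp
  qed
  also have "\<dots> = (\<Sum>y\<in>Poly_Mapping.keys c. snd (snd y) * int (Poly_Mapping.lookup c y))"
    by (rule sum.image_gen[symmetric]) simp
  finally show ?thesis .
qed

definition fcq :: "umon \<Rightarrow> cmon \<Rightarrow> pmon \<Rightarrow> nat \<Rightarrow> int \<Rightarrow> bool" where
  "fcq m c P a0 k0 \<longleftrightarrow> (\<forall>a j. Poly_Mapping.lookup m (a,j) = mg1 c a j) \<and>
     (\<forall>a k. Poly_Mapping.lookup P (a,k) = mg2 c a k + (if (a,k) = (a0,k0) then 1 else 0))"

lemma fcond_shift_q:
  "fcond (m + Poly_Mapping.single (a0,j0) 1) (c + Poly_Mapping.single (a0,j0,k0) 1) P \<longleftrightarrow> fcq m c P a0 k0"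
  unfolding fcond_def fcq_def by (simp only: mg1_add_single mg2_add_single lookup_add_single) simp

definition LL :: "qdp \<Rightarrow> nat \<Rightarrow> nat \<Rightarrow> pmon \<Rightarrow> (umon \<times> cmon) \<times> (nat \<times> nat \<times> int) \<Rightarrow> complex" where
  "LL g e h P = (\<lambda>((m,c),y). if y \<in> SL c then (if fcond m c P then LTv g e h m c y * WW m c else 0) else 0)"

definition RR :: "qdp \<Rightarrow> nat \<Rightarrow> nat \<Rightarrow> pmon \<Rightarrow> (umon \<times> cmon) \<times> (nat \<times> nat \<times> int) \<Rightarrow> complex" where
  "RR g e h P = (\<lambda>((m,c),y). if y \<in> Poly_Mapping.keys c then (if fcond m c P then
      (\<i> * of_int (snd (snd y)) * of_nat (Poly_Mapping.lookup c y)) * g m e h * WW m c else 0) else 0)"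

definition psiL :: "(umon \<times> cmon) \<times> (nat \<times> nat \<times> int) \<Rightarrow> (umon \<times> cmon) \<times> (nat \<times> nat \<times> int)" where
  "psiL = (\<lambda>((m,c),(a,j,k)). ((m + Poly_Mapping.single (a, Suc j) 1, c + Poly_Mapping.single (a, Suc j, k) 1), (a,j,k)))"

definition psiR :: "(umon \<times> cmon) \<times> (nat \<times> nat \<times> int) \<Rightarrow> (umon \<times> cmon) \<times> (nat \<times> nat \<times> int)" where
  "psiR = (\<lambda>((m,c),(a,j,k)). ((m + Poly_Mapping.single (a,j) 1, c + Poly_Mapping.single (a,j,k) 1), (a,j,k)))"

lemma inj_psiL: "inj psiL"
  by (rule injI) (auto simp: psiL_def split: prod.splits)

lemma inj_psiR: "inj psiR"
  by (rule injI) (auto simp: psiR_def split: prod.splits)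

lemma fld4: "(A::complex) \<noteq> 0 \<Longrightarrow> M1 \<noteq> 0 \<Longrightarrow> C0 \<noteq> 0 \<Longrightarrow> pc \<noteq> 0 \<Longrightarrow>
  A / M1 * (M0 * G) * (M1 * pm / (A * pc) * (w * x * Pi)) = (w * C0) * G * (M0 * pm / (C0 * pc) * (x * Pi))"
  by (simp add: field_simps)

lemma LL_RR_pt: "LL g e h P (psiL w) = RR g e h P (psiR w)"
proof -
  obtain m0 c0 a j k where we: "w = ((m0,c0),(a,j,k))" by (metis prod.collapse)
  let ?e1 = "Poly_Mapping.single (a, Suc j) (1::nat)"
  let ?e1' = "Poly_Mapping.single (a, Suc j, k) (1::nat)"
  let ?e0 = "Poly_Mapping.single (a, j) (1::nat)"
  let ?e0' = "Poly_Mapping.single (a, j, k) (1::nat)"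
  have inSL: "(a,j,k) \<in> SL (c0 + ?e1')" by (simp add: SL_def)
  have inK: "(a,j,k) \<in> Poly_Mapping.keys (c0 + ?e0')" by simp
  have gm: "m0 + ?e1 - ?e1 + ?e0 = m0 + ?e0" by simp
  have l1: "Poly_Mapping.lookup (c0 + ?e1') (a, Suc j, k) = Poly_Mapping.lookup c0 (a, Suc j, k) + 1" by (simp add: lookup_add)
  have l2: "Poly_Mapping.lookup (m0 + ?e1) (a, Suc j) = Poly_Mapping.lookup m0 (a, Suc j) + 1" by (simp add: lookup_add)
  have l3: "Poly_Mapping.lookup (m0 + ?e1) (a, j) = Poly_Mapping.lookup m0 (a, j)" by (simp add: lookup_add lookup_single)
  have l4: "Poly_Mapping.lookup (c0 + ?e0') (a, j, k) = Poly_Mapping.lookup c0 (a, j, k) + 1" by (simp add: lookup_add)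
  have wvS: "wv (a, Suc j, k) = (\<i> * of_int k) * wv (a,j,k)" by (simp add: wv_def)
  have nzA: "(of_nat (Poly_Mapping.lookup c0 (a, Suc j, k) + 1) :: complex) \<noteq> 0" by (simp only: of_nat_eq_0_iff)
  have nzM: "(of_nat (Poly_Mapping.lookup m0 (a, Suc j) + 1) :: complex) \<noteq> 0" by (simp only: of_nat_eq_0_iff)
  have nzC: "(of_nat (Poly_Mapping.lookup c0 (a, j, k) + 1) :: complex) \<noteq> 0" by (simp only: of_nat_eq_0_iff)
  show ?thesis
  proof (cases "fcq m0 c0 P a k")
    case True
    have L: "LL g e h P (psiL w) = of_nat (Poly_Mapping.lookup c0 (a, Suc j, k) + 1) / of_nat (Poly_Mapping.lookup m0 (a, Suc j) + 1) *
         (of_nat (Poly_Mapping.lookup m0 (a,j) + 1) * g (m0 + ?e0) e h) *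
         (of_nat (Poly_Mapping.lookup m0 (a, Suc j) + 1) * pfact m0 / (of_nat (Poly_Mapping.lookup c0 (a, Suc j, k) + 1) * pfact c0)
          * ((\<i> * of_int k) * wv (a,j,k) * (\<Prod>x\<in>Poly_Mapping.keys c0. wv x ^ Poly_Mapping.lookup c0 x)))"
      unfolding we psiL_def LL_def
      by (simp only: prod.case inSL if_True fcond_shift_q True LTv_def gm l1 l2 l3 WW_shift wvS mult.assoc)
    have R: "RR g e h P (psiR w) = (\<i> * of_int k * of_nat (Poly_Mapping.lookup c0 (a, j, k) + 1)) * g (m0 + ?e0) e h *
         (of_nat (Poly_Mapping.lookup m0 (a, j) + 1) * pfact m0 / (of_nat (Poly_Mapping.lookup c0 (a, j, k) + 1) * pfact c0)
          * (wv (a,j,k) * (\<Prod>x\<in>Poly_Mapping.keys c0. wv x ^ Poly_Mapping.lookup c0 x)))"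
      unfolding we psiR_def RR_def
      by (simp only: prod.case inK if_True fcond_shift_q True l4 WW_shift snd_conv)
    show ?thesis unfolding L R by (rule fld4[OF nzA nzM nzC pfact_nonzero])
  next
    case False
    then show ?thesis unfolding we psiL_def LL_def psiR_def RR_def
      by (simp only: prod.case fcond_shift_q if_False if_cancel)
  qed
qed

lemma range_psiL: "LL g e h P w \<noteq> 0 \<Longrightarrow> w \<in> range psiL"
proof -
  assume nz: "LL g e h P w \<noteq> 0"
  obtain m c a j k where we: "w = ((m,c),(a,j,k))" by (metis prod.collapse)
  have sl: "(a,j,k) \<in> SL c" and fc: "fcond m c P" using nz unfolding we LL_def by (auto split: if_splits)
  have cnz: "Poly_Mapping.lookup c (a, Suc j, k) \<noteq> 0" using sl by (simp add: SL_def in_keys_iff)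
  have mnz: "Poly_Mapping.lookup m (a, Suc j) \<noteq> 0" using fcond_c_le(2)[OF fc, of a "Suc j" k] cnz by linarith
  have "w = psiL ((m - Poly_Mapping.single (a, Suc j) 1, c - Poly_Mapping.single (a, Suc j, k) 1), (a,j,k))"
    unfolding we psiL_def using pm_decomp[OF cnz] pm_decomp[OF mnz] by simp
  then show ?thesis by blast
qed

lemma range_psiR: "RR g e h P w \<noteq> 0 \<Longrightarrow> w \<in> range psiR"
proof -
  assume nz: "RR g e h P w \<noteq> 0"
  obtain m c a j k where we: "w = ((m,c),(a,j,k))" by (metis prod.collapse)
  have sl: "(a,j,k) \<in> Poly_Mapping.keys c" and fc: "fcond m c P" using nz unfolding we RR_def by (auto split: if_splits)
  have cnz: "Poly_Mapping.lookup c (a, j, k) \<noteq> 0" using sl by (simp add: in_keys_iff)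
  have mnz: "Poly_Mapping.lookup m (a, j) \<noteq> 0" using fcond_c_le(2)[OF fc, of a j k] cnz by linarith
  have "w = psiR ((m - Poly_Mapping.single (a, j) 1, c - Poly_Mapping.single (a, j, k) 1), (a,j,k))"
    unfolding we psiR_def using pm_decomp[OF cnz] pm_decomp[OF mnz] by simp
  then show ?thesis by blast
qed

lemma keys_shift_bound:
  assumes "\<forall>x\<in>Poly_Mapping.keys (m - Poly_Mapping.single (a, Suc j) 1 + Poly_Mapping.single (a,j) (1::nat)). snd x \<le> I"
  shows "\<forall>x\<in>Poly_Mapping.keys m. snd x \<le> Suc I"
proof
  fix x assume x: "x \<in> Poly_Mapping.keys m"
  let ?m' = "m - Poly_Mapping.single (a, Suc j) 1 + Poly_Mapping.single (a,j) (1::nat)"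
  have aj: "(a,j) \<in> Poly_Mapping.keys ?m'" by (simp add: in_keys_iff lookup_add)
  show "snd x \<le> Suc I"
  proof (cases "x = (a, Suc j)")
    case True
    have "snd (a,j) \<le> I" using assms aj by blast
    then show ?thesis using True by simp
  next
    case False
    then have "Poly_Mapping.lookup ?m' x \<ge> Poly_Mapping.lookup m x"
      by (simp add: lookup_add lookup_minus lookup_single when_def)
    moreover have "Poly_Mapping.lookup m x \<noteq> 0" using x by (simp add: in_keys_iff)
    ultimately have "Poly_Mapping.lookup ?m' x \<noteq> 0" by linarith
    then have "x \<in> Poly_Mapping.keys ?m'" by (rule in_keys_iff[THEN iffD2])
    then have "snd x \<le> I" using assms by blast
    then show ?thesis by simp
  qed
qed

lemma fourier_dx:
  assumes bnd: "\<forall>m. g m e h \<noteq> 0 \<longrightarrow> (\<forall>x\<in>Poly_Mapping.keys m. snd x \<le> I)"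
  shows "fourier (dx g) P e h = (\<i> * of_int (momentum P)) * fourier g P e h"
proof -
  let ?L' = "\<lambda>z y. (case z of (m,c) \<Rightarrow> if fcond m c P then LTv g e h m c y * WW m c else 0)"
  let ?R' = "\<lambda>z y. (case z of (m,c) \<Rightarrow> if fcond m c P then
      (\<i> * of_int (snd (snd y)) * of_nat (Poly_Mapping.lookup c y)) * g m e h * WW m c else 0)"
  have "fourier (dx g) P e h = fsum (\<lambda>z. \<Sum>y\<in>SL (snd z). ?L' z y)"
  proof -
    have "fterm (dx g) P e h z = (\<Sum>y\<in>SL (snd z). ?L' z y)" for z
    proof -
      obtain m c where ze: "z = (m,c)" by (cases z) auto
      show ?thesis
      proof (cases "fcond m c P")
        case True then show ?thesis unfolding ze fterm_def using dx_expand[OF True, of g e h]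
          by (simp add: sum_distrib_right)
      next
        case False then show ?thesis unfolding ze fterm_def by simp
      qed
    qed
    then have "fterm (dx g) P e h = (\<lambda>z. \<Sum>y\<in>SL (snd z). ?L' z y)" by (rule ext)
    then show ?thesis by (simp only: fourier_ft)
  qed
  also have "\<dots> = fsum (\<lambda>(z,y). if y \<in> SL (snd z) then ?L' z y else 0)"
  proof (rule fsum_nested)
    show "finite {z. \<exists>y\<in>SL (snd z). ?L' z y \<noteq> 0}"
    proof (rule finite_subset[OF _ FB_finite[of P "Suc I"]], rule subsetI)
      fix z assume "z \<in> {z. \<exists>y\<in>SL (snd z). ?L' z y \<noteq> 0}"
      then have "\<exists>y\<in>SL (snd z). ?L' z y \<noteq> 0" by (rule CollectD)
      then obtain y where y0: "y \<in> SL (snd z)" and nz0: "?L' z y \<noteq> 0" by (rule bexE)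
      obtain m c where ze: "z = (m,c)" by (cases z) auto
      have y: "y \<in> SL c" using y0 ze by simp
      have nz: "?L' (m,c) y \<noteq> 0" using nz0 ze by simp
      have "fcond m c P \<and> (\<forall>x\<in>Poly_Mapping.keys m. snd x \<le> Suc I)"
      proof -
      obtain a j k where ye: "y = (a,j,k)" by (cases y) auto
      have nz': "(if fcond m c P then LTv g e h m c y * WW m c else 0) \<noteq> 0" using nz by simp
      have fc: "fcond m c P" using nz' by (cases "fcond m c P") simp_all
      then have "LTv g e h m c y \<noteq> 0" using nz' by simp
      then have "g (m - Poly_Mapping.single (a, Suc j) 1 + Poly_Mapping.single (a,j) 1) e h \<noteq> 0"
        unfolding ye LTv_def by (simp only: prod.case mult_eq_0_iff de_Morgan_disj) simp
      then have "\<forall>x\<in>Poly_Mapping.keys (m - Poly_Mapping.single (a, Suc j) 1 + Poly_Mapping.single (a,j) 1). snd x \<le> I"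
        by (rule bnd[THEN spec, THEN mp])
      then have "\<forall>x\<in>Poly_Mapping.keys m. snd x \<le> Suc I" by (rule keys_shift_bound)
      then show "fcond m c P \<and> (\<forall>x\<in>Poly_Mapping.keys m. snd x \<le> Suc I)" using fc by simp
    qed
    then show "z \<in> {(m,c). fcond m c P \<and> (\<forall>x\<in>Poly_Mapping.keys m. snd x \<le> Suc I)}" using ze by simp
    qed
  qed (rule finite_SL)
  also have "\<dots> = fsum (LL g e h P)"
    by (rule arg_cong[where f=fsum]) (auto simp: LL_def fun_eq_iff)
  also have "\<dots> = fsum (\<lambda>w. LL g e h P (psiL w))"
    by (rule fsum_reindex[symmetric, OF inj_psiL]) (auto intro: range_psiL)
  also have "\<dots> = fsum (\<lambda>w. RR g e h P (psiR w))" by (simp only: LL_RR_pt)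
  also have "\<dots> = fsum (RR g e h P)"
    by (rule fsum_reindex[OF inj_psiR]) (auto intro: range_psiR)
  also have "\<dots> = fsum (\<lambda>(z,y). if y \<in> Poly_Mapping.keys (snd z) then ?R' z y else 0)"
    by (rule arg_cong[where f=fsum]) (auto simp: RR_def fun_eq_iff)
  also have "\<dots> = fsum (\<lambda>z. \<Sum>y\<in>Poly_Mapping.keys (snd z). ?R' z y)"
  proof (rule fsum_nested[symmetric])
    show "finite {z. \<exists>y\<in>Poly_Mapping.keys (snd z). ?R' z y \<noteq> 0}"
    proof (rule finite_subset[OF _ FB_finite[of P I]], rule subsetI)
      fix z assume "z \<in> {z. \<exists>y\<in>Poly_Mapping.keys (snd z). ?R' z y \<noteq> 0}"
      then obtain y where nz0: "?R' z y \<noteq> 0" by blast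
      obtain m c where ze: "z = (m,c)" by (cases z) auto
      have nz: "?R' (m,c) y \<noteq> 0" using nz0 ze by simp
      then have fc: "fcond m c P" and "g m e h \<noteq> 0" by (auto split: if_splits)
      then show "z \<in> {(m,c). fcond m c P \<and> (\<forall>x\<in>Poly_Mapping.keys m. snd x \<le> I)}" using bnd ze by blast
    qed
  qed simp
  also have "\<dots> = fsum (\<lambda>z. (\<i> * of_int (momentum P)) * fterm g P e h z)"
  proof -
    have "(\<Sum>y\<in>Poly_Mapping.keys (snd z). ?R' z y) = (\<i> * of_int (momentum P)) * fterm g P e h z" for z
    proof -
      obtain m c where ze: "z = (m,c)" by (cases z) auto
      show ?thesis
      proof (cases "fcond m c P")
        case True
        have "(\<Sum>y\<in>Poly_Mapping.keys c. (\<i> * of_int (snd (snd y)) * of_nat (Poly_Mapping.lookup c y)) * g m e h * WW m c)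
          = \<i> * (\<Sum>y\<in>Poly_Mapping.keys c. of_int (snd (snd y) * int (Poly_Mapping.lookup c y))) * g m e h * WW m c"
          by (simp add: sum_distrib_left sum_distrib_right mult_ac)
        also have "(\<Sum>y\<in>Poly_Mapping.keys c. of_int (snd (snd y) * int (Poly_Mapping.lookup c y)) :: complex) = of_int (momentum P)"
          by (simp only: fcond_mom[OF True] of_int_sum)
        finally show ?thesis unfolding ze fterm_def using True by (simp add: mult_ac)
      next
        case False then show ?thesis unfolding ze fterm_def by simp
      qed
    qed
    then show ?thesis by presburger
  qed
  also have "\<dots> = (\<i> * of_int (momentum P)) * fourier g P e h"
    by (simp only: fsum_cmult fourier_ft)
  finally show ?thesis .
qed



lemma jet_nz: "jet m x \<noteq> 0 \<Longrightarrow> x \<in> Poly_Mapping.keys m"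
  unfolding jet_def by (auto simp: in_keys_iff split: prod.splits if_splits)

lemma valid_bound:
  assumes "qdp_valid N f"
  shows "\<exists>I. \<forall>m. f m e h \<noteq> 0 \<longrightarrow> (\<forall>x\<in>Poly_Mapping.keys m. snd x \<le> I)"
proof -
  let ?J = "{jet m | m. f m e h \<noteq> 0}"
  have fJ: "finite ?J" using assms unfolding qdp_valid_def by blast
  let ?S = "\<Union>g\<in>?J. {x. g x \<noteq> 0}"
  have fS: "finite ?S"
  proof (rule finite_UN_I[OF fJ])
    fix g assume "g \<in> ?J"
    then obtain m where "g = jet m" by blast
    then have "{x. g x \<noteq> 0} \<subseteq> Poly_Mapping.keys m" using jet_nz by blast
    then show "finite {x. g x \<noteq> 0}" by (rule finite_subset) simp
  qed
  let ?I = "Max (insert 0 (snd ` ?S))"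
  have "\<forall>m. f m e h \<noteq> 0 \<longrightarrow> (\<forall>x\<in>Poly_Mapping.keys m. snd x \<le> ?I)"
  proof (intro allI impI ballI)
    fix m x assume fm: "f m e h \<noteq> 0" and x: "x \<in> Poly_Mapping.keys m"
    show "snd x \<le> ?I"
    proof (cases "snd x = 0")
      case True then show ?thesis by simp
    next
      case False
      then have "jet m x \<noteq> 0" using x unfolding jet_def by (auto simp: in_keys_iff split: prod.splits)
      then have "x \<in> ?S" using fm by blast
      then show ?thesis using fS by (intro Max_ge) auto
    qed
  qed
  then show ?thesis by blast
qed

definition bnd :: "qdp \<Rightarrow> nat \<Rightarrow> nat \<Rightarrow> nat" where
  "bnd f e h = (SOME I. \<forall>m. f m e h \<noteq> 0 \<longrightarrow> (\<forall>x\<in>Poly_Mapping.keys m. snd x \<le> I))"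

lemma bnd_prop: "qdp_valid N f \<Longrightarrow> f m e h \<noteq> 0 \<Longrightarrow> x \<in> Poly_Mapping.keys m \<Longrightarrow> snd x \<le> bnd f e h"
  using someI_ex[OF valid_bound[of N f e h]] unfolding bnd_def by blast

lemma bnd_prop': "qdp_valid N f \<Longrightarrow> \<forall>m. f m e h \<noteq> 0 \<longrightarrow> (\<forall>x\<in>Poly_Mapping.keys m. snd x \<le> bnd f e h)"
  using bnd_prop by blast

lemma jetdeg_super: "finite S \<Longrightarrow> Poly_Mapping.keys m \<subseteq> S \<Longrightarrow> jetdeg m = (\<Sum>x\<in>S. snd x * Poly_Mapping.lookup m x)"
  unfolding jetdeg_def by (rule sum_keys_super) auto

lemma jetdeg_add_single: "jetdeg (m + Poly_Mapping.single y 1) = jetdeg m + snd y"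
proof -
  let ?S = "insert y (Poly_Mapping.keys m)"
  have "jetdeg (m + Poly_Mapping.single y 1) = (\<Sum>x\<in>?S. snd x * Poly_Mapping.lookup (m + Poly_Mapping.single y 1) x)"
    by (rule jetdeg_super) auto
  also have "\<dots> = (\<Sum>x\<in>?S. snd x * Poly_Mapping.lookup m x) + (\<Sum>x\<in>?S. if x = y then snd x else 0)"
  proof -
    have "snd x * Poly_Mapping.lookup (m + Poly_Mapping.single y 1) x = snd x * Poly_Mapping.lookup m x + (if x = y then snd x else 0)" for x
      by (simp only: lookup_add_single) simp
    then show ?thesis by (simp only: sum.distrib)
  qed
  also have "(\<Sum>x\<in>?S. snd x * Poly_Mapping.lookup m x) = jetdeg m" by (rule jetdeg_super[symmetric]) auto
  also have "(\<Sum>x\<in>?S. if x = y then snd x else 0) = snd y" by simp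
  finally show ?thesis .
qed

lemma dx_shift_jetdeg:
  assumes "(a, Suc k) \<in> Poly_Mapping.keys m"
  shows "jetdeg (m - Poly_Mapping.single (a, Suc k) 1 + Poly_Mapping.single (a,k) 1) + 1 = jetdeg m"
proof -
  let ?m0 = "m - Poly_Mapping.single (a, Suc k) 1"
  have "m = ?m0 + Poly_Mapping.single (a, Suc k) 1" using assms by (intro pm_decomp) (simp add: in_keys_iff)
  then have "jetdeg m = jetdeg ?m0 + Suc k" by (metis jetdeg_add_single snd_conv)
  moreover have "jetdeg (?m0 + Poly_Mapping.single (a,k) 1) = jetdeg ?m0 + k" by (simp only: jetdeg_add_single snd_conv)
  ultimately show ?thesis by simp
qed

lemma dx_nz:
  assumes "dx g m e h \<noteq> 0"
  shows "\<exists>a k. (a, Suc k) \<in> Poly_Mapping.keys m \<and> g (m - Poly_Mapping.single (a, Suc k) 1 + Poly_Mapping.single (a,k) 1) e h \<noteq> 0"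
proof (rule ccontr)
  assume "\<not> ?thesis"
  then have "\<forall>x\<in>{(a,k). (a, Suc k) \<in> Poly_Mapping.keys m}.
      of_nat (Poly_Mapping.lookup m x + 1) * g (m - Poly_Mapping.single (fst x, Suc (snd x)) 1 + Poly_Mapping.single x 1) e h = 0"
    by auto
  then have "dx g m e h = 0" unfolding dx_def by (simp only: sum.neutral)
  then show False using assms by simp
qed

lemma dx_pow_vanish: "jetdeg m < i \<Longrightarrow> (dx ^^ i) g m e h = 0"
proof (induction i arbitrary: m)
  case 0 then show ?case by simp
next
  case (Suc i)
  show ?case
  proof (rule ccontr)
    assume "(dx ^^ Suc i) g m e h \<noteq> 0"
    then have "dx ((dx ^^ i) g) m e h \<noteq> 0" by simp
    then obtain a k where k: "(a, Suc k) \<in> Poly_Mapping.keys m"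
      and nz: "(dx ^^ i) g (m - Poly_Mapping.single (a, Suc k) 1 + Poly_Mapping.single (a,k) 1) e h \<noteq> 0"
      using dx_nz by blast
    have "jetdeg (m - Poly_Mapping.single (a, Suc k) 1 + Poly_Mapping.single (a,k) 1) + 1 = jetdeg m"
      by (rule dx_shift_jetdeg[OF k])
    then have "jetdeg (m - Poly_Mapping.single (a, Suc k) 1 + Poly_Mapping.single (a,k) 1) < i" using Suc.prems by simp
    then show False using Suc.IH nz by blast
  qed
qed

lemma dx_pow_zero: "(\<forall>m. g m e h = 0) \<Longrightarrow> (dx ^^ i) g m e h = 0"
proof (induction i arbitrary: m)
  case 0 then show ?case by simp
next
  case (Suc i)
  then show ?case by (simp add: dx_def)
qed

lemma valid_keys: "qdp_valid N f \<Longrightarrow> f m e h \<noteq> 0 \<Longrightarrow> x \<in> Poly_Mapping.keys m \<Longrightarrow> 1 \<le> fst x \<and> fst x \<le> N"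
  unfolding qdp_valid_def by blast

lemma valid_jets: "qdp_valid N f \<Longrightarrow> finite {jet m | m. f m e h \<noteq> 0}"
  unfolding qdp_valid_def by blast

lemma qdp_validI:
  assumes "\<And>m e h x. f m e h \<noteq> 0 \<Longrightarrow> x \<in> Poly_Mapping.keys m \<Longrightarrow> 1 \<le> fst x \<and> fst x \<le> N"
    and "\<And>e h. finite {jet m | m. f m e h \<noteq> 0}"
  shows "qdp_valid N f"
  unfolding qdp_valid_def using assms by blast

lemma du_valid:
  assumes v: "qdp_valid N f"
  shows "qdp_valid N (du a i f)"
proof (rule qdp_validI)
  fix m e h x assume nz: "du a i f m e h \<noteq> 0" and x: "x \<in> Poly_Mapping.keys m"
  have fnz: "f (m + Poly_Mapping.single (a,i) 1) e h \<noteq> 0" using nz unfolding du_def by auto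
  have "x \<in> Poly_Mapping.keys (m + Poly_Mapping.single (a,i) 1)" using x by simp
  then show "1 \<le> fst x \<and> fst x \<le> N" by (rule valid_keys[OF v fnz])
next
  fix e h
  let ?F = "\<lambda>g x. g x - (if x = (a,i) \<and> 0 < i then 1 else 0)"
  have "{jet m | m. du a i f m e h \<noteq> 0} \<subseteq> ?F ` {jet m | m. f m e h \<noteq> 0}"
  proof
    fix g assume "g \<in> {jet m | m. du a i f m e h \<noteq> 0}"
    then obtain m where ge: "g = jet m" and nz: "du a i f m e h \<noteq> 0" by blast
    have fnz: "f (m + Poly_Mapping.single (a,i) 1) e h \<noteq> 0" using nz unfolding du_def by auto
    have "jet m = ?F (jet (m + Poly_Mapping.single (a,i) 1))"
      by (rule ext) (auto simp: jet_def lookup_add lookup_single when_def split: prod.splits)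
    then show "g \<in> ?F ` {jet m | m. f m e h \<noteq> 0}" using ge fnz by blast
  qed
  then show "finite {jet m | m. du a i f m e h \<noteq> 0}"
    by (rule finite_subset) (rule finite_imageI[OF valid_jets[OF v]])
qed

lemma dx_valid:
  assumes v: "qdp_valid N g"
  shows "qdp_valid N (dx g)"
proof (rule qdp_validI)
  fix m e h x assume nz: "dx g m e h \<noteq> 0" and x: "x \<in> Poly_Mapping.keys m"
  obtain a k where k: "(a, Suc k) \<in> Poly_Mapping.keys m"
    and gnz: "g (m - Poly_Mapping.single (a, Suc k) 1 + Poly_Mapping.single (a,k) 1) e h \<noteq> 0"
    using dx_nz[OF nz] by blast
  let ?m' = "m - Poly_Mapping.single (a, Suc k) 1 + Poly_Mapping.single (a,k) 1"
  have ak: "(a,k) \<in> Poly_Mapping.keys ?m'" by (simp add: in_keys_iff lookup_add)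
  show "1 \<le> fst x \<and> fst x \<le> N"
  proof (cases "x = (a, Suc k)")
    case True
    have "1 \<le> fst (a,k) \<and> fst (a,k) \<le> N" by (rule valid_keys[OF v gnz ak])
    then show ?thesis using True by simp
  next
    case False
    then have "Poly_Mapping.lookup ?m' x \<ge> Poly_Mapping.lookup m x"
      by (simp add: lookup_add lookup_minus lookup_single when_def)
    moreover have "Poly_Mapping.lookup m x \<noteq> 0" using x by (simp add: in_keys_iff)
    ultimately have "Poly_Mapping.lookup ?m' x \<noteq> 0" by linarith
    then have "x \<in> Poly_Mapping.keys ?m'" by (rule in_keys_iff[THEN iffD2])
    then show ?thesis by (rule valid_keys[OF v gnz])
  qed
next
  fix e h
  let ?B = "bnd g e h"
  let ?F = "\<lambda>(g0, a, k) x. g0 x - (if x = (a,k) \<and> 0 < k then 1 else 0) + (if x = (a, Suc k) then 1 else 0)"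
  let ?D = "{jet m | m. g m e h \<noteq> 0} \<times> {1..N} \<times> {..?B}"
  have "{jet m | m. dx g m e h \<noteq> 0} \<subseteq> ?F ` ?D"
  proof
    fix j0 assume "j0 \<in> {jet m | m. dx g m e h \<noteq> 0}"
    then obtain m where je: "j0 = jet m" and nz: "dx g m e h \<noteq> 0" by blast
    obtain a k where k: "(a, Suc k) \<in> Poly_Mapping.keys m"
      and gnz: "g (m - Poly_Mapping.single (a, Suc k) 1 + Poly_Mapping.single (a,k) 1) e h \<noteq> 0"
      using dx_nz[OF nz] by blast
    let ?m' = "m - Poly_Mapping.single (a, Suc k) 1 + Poly_Mapping.single (a,k) 1"
    have ak: "(a,k) \<in> Poly_Mapping.keys ?m'" by (simp add: in_keys_iff lookup_add)
    have aN: "a \<in> {1..N}" using valid_keys[OF v gnz ak] by simp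
    have kB: "k \<in> {..?B}" using bnd_prop[OF v gnz ak] by simp
    have mk: "Poly_Mapping.lookup m (a, Suc k) \<noteq> 0" using k by (simp add: in_keys_iff)
    have "jet m = ?F (jet ?m', a, k)"
      using mk by (intro ext) (auto simp: jet_def lookup_add lookup_minus lookup_single when_def split: prod.splits)
    then show "j0 \<in> ?F ` ?D" using je gnz aN kB by blast
  qed
  moreover have "finite ?D" using valid_jets[OF v] by simp
  ultimately show "finite {jet m | m. dx g m e h \<noteq> 0}"
    by (rule finite_subset[OF _ finite_imageI])
qed

lemma dxpow_valid: "qdp_valid N g \<Longrightarrow> qdp_valid N ((dx ^^ i) g)"
  by (induction i) (auto intro: dx_valid)

lemma smul_valid:
  assumes v: "qdp_valid N g"
  shows "qdp_valid N (\<lambda>m e h. c * g m e h)"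
proof (rule qdp_validI)
  fix m e h x assume a: "c * g m e h \<noteq> 0" "x \<in> Poly_Mapping.keys m"
  then have "g m e h \<noteq> 0" by simp
  then show "1 \<le> fst x \<and> fst x \<le> N" using valid_keys[OF v _ a(2)] by blast
next
  fix e h
  have "{jet m | m. c * g m e h \<noteq> 0} \<subseteq> {jet m | m. g m e h \<noteq> 0}" by auto
  then show "finite {jet m | m. c * g m e h \<noteq> 0}" by (rule finite_subset) (rule valid_jets[OF v])
qed

lemma sum_valid:
  fixes I :: "nat \<Rightarrow> nat \<Rightarrow> nat"
  assumes v: "\<And>i. qdp_valid N (G i)"
  shows "qdp_valid N (\<lambda>m e h. \<Sum>i\<le>I e h. G i m e h)"
proof (rule qdp_validI)
  fix m e h x assume nz: "(\<Sum>i\<le>I e h. G i m e h) \<noteq> 0" and x: "x \<in> Poly_Mapping.keys m"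
  obtain i where "G i m e h \<noteq> 0" using nz by (meson sum.neutral)
  then show "1 \<le> fst x \<and> fst x \<le> N" using valid_keys[OF v _ x] by blast
next
  fix e h
  have "{jet m | m. (\<Sum>i\<le>I e h. G i m e h) \<noteq> 0} \<subseteq> (\<Union>i\<le>I e h. {jet m | m. G i m e h \<noteq> 0})"
  proof
    fix g assume "g \<in> {jet m | m. (\<Sum>i\<le>I e h. G i m e h) \<noteq> 0}"
    then obtain m where ge: "g = jet m" and nz: "(\<Sum>i\<le>I e h. G i m e h) \<noteq> 0" by blast
    obtain i where "i \<in> {..I e h}" "G i m e h \<noteq> 0" using nz by (meson sum.neutral)
    then show "g \<in> (\<Union>i\<le>I e h. {jet m | m. G i m e h \<noteq> 0})" using ge by blast
  qed
  moreover have "finite (\<Union>i\<le>I e h. {jet m | m. G i m e h \<noteq> 0})"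
    by (rule finite_UN_I) (simp_all add: valid_jets[OF v])
  ultimately show "finite {jet m | m. (\<Sum>i\<le>I e h. G i m e h) \<noteq> 0}" by (rule finite_subset)
qed

lemma add_valid:
  assumes v: "qdp_valid N f" "qdp_valid N g"
  shows "qdp_valid N (\<lambda>m e h. f m e h + g m e h)"
proof (rule qdp_validI)
  fix m e h x assume nz: "f m e h + g m e h \<noteq> 0" and x: "x \<in> Poly_Mapping.keys m"
  then have "f m e h \<noteq> 0 \<or> g m e h \<noteq> 0" by auto
  then show "1 \<le> fst x \<and> fst x \<le> N" using valid_keys[OF v(1) _ x] valid_keys[OF v(2) _ x] by blast
next
  fix e h
  have "{jet m | m. f m e h + g m e h \<noteq> 0} \<subseteq> {jet m | m. f m e h \<noteq> 0} \<union> {jet m | m. g m e h \<noteq> 0}" by force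
  then show "finite {jet m | m. f m e h + g m e h \<noteq> 0}"
    by (rule finite_subset) (simp add: valid_jets[OF v(1)] valid_jets[OF v(2)])
qed



lemma du_zero_beyond:
  assumes v: "qdp_valid N f" and i: "bnd f e h < i"
  shows "du mu i f m e h = 0"
proof (rule ccontr)
  assume "du mu i f m e h \<noteq> 0"
  then have fnz: "f (m + Poly_Mapping.single (mu,i) 1) e h \<noteq> 0" unfolding du_def by auto
  have "(mu,i) \<in> Poly_Mapping.keys (m + Poly_Mapping.single (mu,i) 1)" by simp
  then have "snd (mu,i) \<le> bnd f e h" by (rule bnd_prop[OF v fnz])
  then show False using i by simp
qed

lemma vard_eq:
  assumes v: "qdp_valid N f"
  shows "vard mu f m e h = (\<Sum>i\<le>bnd f e h. (-1) ^ i * (dx ^^ i) (du mu i f) m e h)"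
proof -
  let ?t = "\<lambda>i. (-1) ^ i * (dx ^^ i) (du mu i f) m e h :: complex"
  let ?M = "max (jetdeg m) (bnd f e h)"
  have z1: "?t i = 0" if "jetdeg m < i" for i using dx_pow_vanish[OF that] by simp
  have z2: "?t i = 0" if "bnd f e h < i" for i
    using dx_pow_zero[of "du mu i f" e h i m] du_zero_beyond[OF v that] by simp
  have "vard mu f m e h = (\<Sum>i\<le>jetdeg m. ?t i)" unfolding vard_def by simp
  also have "\<dots> = (\<Sum>i\<le>?M. ?t i)"
  proof (rule sum.mono_neutral_left)
    show "\<forall>i\<in>{..?M} - {..jetdeg m}. ?t i = 0" using z1 by auto
  qed auto
  also have "\<dots> = (\<Sum>i\<le>bnd f e h. ?t i)"
  proof (rule sum.mono_neutral_right)
    show "\<forall>i\<in>{..?M} - {..bnd f e h}. ?t i = 0" using z2 by auto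
  qed auto
  finally show ?thesis .
qed

lemma vard_fun_eq:
  assumes v: "qdp_valid N f"
  shows "vard mu f = (\<lambda>m e h. \<Sum>i\<le>bnd f e h. (-1) ^ i * (dx ^^ i) (du mu i f) m e h)"
  using vard_eq[OF v] by (intro ext) simp

lemma vard_valid:
  assumes v: "qdp_valid N f"
  shows "qdp_valid N (vard mu f)"
  unfolding vard_fun_eq[OF v]
  by (rule sum_valid, rule smul_valid, rule dxpow_valid, rule du_valid[OF v])

lemma fourier_smul: "fourier (\<lambda>m e h. c * g m e h) P e h = c * fourier g P e h"
proof -
  have "fterm (\<lambda>m e h. c * g m e h) P e h = (\<lambda>z. c * fterm g P e h z)"
    by (rule ext) (auto simp: fterm_def)
  then show ?thesis by (simp only: fourier_ft fsum_cmult)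
qed

lemma fourier_sum:
  fixes I :: "nat \<Rightarrow> nat \<Rightarrow> nat"
  assumes v: "\<And>i. qdp_valid N (G i)"
  shows "fourier (\<lambda>m e h. \<Sum>i\<le>I e h. G i m e h) P e h = (\<Sum>i\<le>I e h. fourier (G i) P e h)"
proof -
  have "fterm (\<lambda>m e h. \<Sum>i\<le>I e h. G i m e h) P e h = (\<lambda>z. \<Sum>i\<le>I e h. fterm (G i) P e h z)"
    by (rule ext) (auto simp: fterm_def sum_distrib_right)
  moreover have "\<forall>i\<in>{..I e h}. finite {z. fterm (G i) P e h z \<noteq> 0}"
  proof
    fix i show "finite {z. fterm (G i) P e h z \<noteq> 0}" by (rule fterm_finite[where f="G i" and e=e and h=h, OF bnd_prop'[OF v[of i]]])
  qed
  ultimately show ?thesis by (simp only: fourier_ft fsum_sum[OF finite_atMost])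
qed

lemma fourier_dxpow:
  assumes v: "qdp_valid N g"
  shows "fourier ((dx ^^ i) g) P e h = (\<i> * of_int (momentum P)) ^ i * fourier g P e h"
proof (induction i)
  case 0 then show ?case by simp
next
  case (Suc i)
  have "fourier ((dx ^^ Suc i) g) P e h = fourier (dx ((dx ^^ i) g)) P e h" by simp
  also have "\<dots> = (\<i> * of_int (momentum P)) * fourier ((dx ^^ i) g) P e h"
    by (rule fourier_dx[where g="(dx ^^ i) g" and e=e and h=h, OF bnd_prop'[OF dxpow_valid[OF v]]])
  also have "\<dots> = (\<i> * of_int (momentum P)) ^ Suc i * fourier g P e h" using Suc.IH by simp
  finally show ?case .
qed

lemma fourier_vard:
  assumes v: "qdp_valid N f"
  shows "fourier (vard mu f) P e h =
     of_nat (Poly_Mapping.lookup P (mu, - momentum P) + 1) * fourier f (P + Poly_Mapping.single (mu, - momentum P) 1) e h"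
proof -
  let ?l = "- momentum P"
  have "fourier (vard mu f) P e h = (\<Sum>i\<le>bnd f e h. fourier (\<lambda>m e h. (-1) ^ i * (dx ^^ i) (du mu i f) m e h) P e h)"
    unfolding vard_fun_eq[OF v]
    by (rule fourier_sum, rule smul_valid, rule dxpow_valid, rule du_valid[OF v])
  also have "\<dots> = (\<Sum>i\<le>bnd f e h. (\<i> * of_int ?l) ^ i * fourier (du mu i f) P e h)"
  proof (rule sum.cong[OF refl])
    fix i
    have "fourier (\<lambda>m e h. (-1) ^ i * (dx ^^ i) (du mu i f) m e h) P e h = (-1) ^ i * ((\<i> * of_int (momentum P)) ^ i * fourier (du mu i f) P e h)"
      by (simp only: fourier_smul fourier_dxpow[OF du_valid[OF v]])
    also have "\<dots> = (\<i> * of_int ?l) ^ i * fourier (du mu i f) P e h"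
      by (simp add: power_mult_distrib[symmetric])
    finally show "fourier (\<lambda>m e h. (-1) ^ i * (dx ^^ i) (du mu i f) m e h) P e h = (\<i> * of_int ?l) ^ i * fourier (du mu i f) P e h" .
  qed
  also have "\<dots> = of_nat (Poly_Mapping.lookup P (mu, ?l) + 1) * fourier f (P + Poly_Mapping.single (mu, ?l) 1) e h"
    by (rule fourier_du[where f=f and e=e and h=h, symmetric, OF bnd_prop'[OF v]])
  finally show ?thesis .
qed



lemma dxpow_nz: "(dx ^^ i) g m e h \<noteq> 0 \<Longrightarrow> \<exists>m'. g m' e h \<noteq> 0 \<and> jetdeg m' + i = jetdeg m"
proof (induction i arbitrary: m)
  case 0 then show ?case by auto
next
  case (Suc i)
  then have "dx ((dx ^^ i) g) m e h \<noteq> 0" by simp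
  then obtain a k where k: "(a, Suc k) \<in> Poly_Mapping.keys m"
    and nz: "(dx ^^ i) g (m - Poly_Mapping.single (a, Suc k) 1 + Poly_Mapping.single (a,k) 1) e h \<noteq> 0"
    using dx_nz by blast
  obtain m' where "g m' e h \<noteq> 0" "jetdeg m' + i = jetdeg (m - Poly_Mapping.single (a, Suc k) 1 + Poly_Mapping.single (a,k) 1)"
    using Suc.IH[OF nz] by blast
  moreover have "jetdeg (m - Poly_Mapping.single (a, Suc k) 1 + Poly_Mapping.single (a,k) 1) + 1 = jetdeg m"
    by (rule dx_shift_jetdeg[OF k])
  ultimately show ?case by (intro exI[of _ m']) simp
qed

lemma vard_deg:
  assumes v: "qdp_valid N f" and d: "deg_le0 f"
  shows "deg_le0 (vard mu f)"
  unfolding deg_le0_def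
proof (intro allI impI)
  fix m e h assume nz: "vard mu f m e h \<noteq> 0"
  then obtain i where "(-1) ^ i * (dx ^^ i) (du mu i f) m e h \<noteq> (0::complex)"
    unfolding vard_def by (meson sum.neutral)
  then have "(dx ^^ i) (du mu i f) m e h \<noteq> 0" by simp
  then obtain m' where m': "du mu i f m' e h \<noteq> 0" "jetdeg m' + i = jetdeg m" using dxpow_nz by blast
  then have "f (m' + Poly_Mapping.single (mu,i) 1) e h \<noteq> 0" unfolding du_def by auto
  then have "jetdeg (m' + Poly_Mapping.single (mu,i) 1) \<le> e + 2 * h" using d unfolding deg_le0_def by blast
  then show "jetdeg m \<le> e + 2 * h" using m'(2) by (simp only: jetdeg_add_single snd_conv)
qed

lemma dx_add: "dx (\<lambda>m e h. f m e h + g m e h) m e h = dx f m e h + dx g m e h"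
  unfolding dx_def by (simp add: distrib_left sum.distrib)

lemma dx_sum:
  fixes I :: "nat \<Rightarrow> nat \<Rightarrow> nat"
  shows "dx (\<lambda>m e h. \<Sum>j\<le>I e h. G j m e h) m e h = (\<Sum>j\<le>I e h. dx (G j) m e h)"
  unfolding dx_def by (simp add: sum_distrib_left sum.swap[of _ "{..I e h}"])

lemma lf_eq_trans:
  assumes "lf_eq N f g" "lf_eq N g k"
  shows "lf_eq N f k"
proof -
  obtain k1 c1 where 1: "qdp_valid N k1" "\<forall>m e h. m \<noteq> 0 \<longrightarrow> c1 m e h = 0" "\<forall>m e h. f m e h - g m e h = dx k1 m e h + c1 m e h"
    using assms(1) unfolding lf_eq_def by blast
  obtain k2 c2 where 2: "qdp_valid N k2" "\<forall>m e h. m \<noteq> 0 \<longrightarrow> c2 m e h = 0" "\<forall>m e h. g m e h - k m e h = dx k2 m e h + c2 m e h"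
    using assms(2) unfolding lf_eq_def by blast
  show ?thesis unfolding lf_eq_def
  proof (intro exI conjI)
    show "qdp_valid N (\<lambda>m e h. k1 m e h + k2 m e h)" by (rule add_valid[OF 1(1) 2(1)])
    show "\<forall>m e h. m \<noteq> 0 \<longrightarrow> c1 m e h + c2 m e h = 0" using 1(2) 2(2) by simp
    show "\<forall>m e h. f m e h - k m e h = dx (\<lambda>m e h. k1 m e h + k2 m e h) m e h + (c1 m e h + c2 m e h)"
    proof (intro allI)
      fix m e h
      have "f m e h - k m e h = (f m e h - g m e h) + (g m e h - k m e h)" by simp
      also have "\<dots> = dx k1 m e h + c1 m e h + (dx k2 m e h + c2 m e h)" using 1(3) 2(3) by simp
      finally show "f m e h - k m e h = dx (\<lambda>m e h. k1 m e h + k2 m e h) m e h + (c1 m e h + c2 m e h)"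
        by (simp add: dx_add)
    qed
  qed
qed

lemma vard_lf:
  assumes v: "qdp_valid N f"
  shows "lf_eq N (vard mu f) (du mu 0 f)"
proof -
  let ?t = "\<lambda>i m e h. (-1) ^ i * (dx ^^ i) (du mu i f) m e h :: complex"
  let ?K = "\<lambda>m e h. \<Sum>j\<le>bnd f e h. (-1) ^ Suc j * (dx ^^ j) (du mu (Suc j) f) m e h :: complex"
  have Kv: "qdp_valid N ?K"
    by (rule sum_valid, rule smul_valid, rule dxpow_valid, rule du_valid[OF v])
  have eq: "vard mu f m e h - du mu 0 f m e h = dx ?K m e h + 0" for m e h
  proof -
    have "dx ?K m e h = (\<Sum>j\<le>bnd f e h. dx (\<lambda>m e h. (-1) ^ Suc j * (dx ^^ j) (du mu (Suc j) f) m e h) m e h)"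
      by (rule dx_sum)
    also have "\<dots> = (\<Sum>j\<le>bnd f e h. ?t (Suc j) m e h)"
      by (rule sum.cong[OF refl]) (simp add: dx_def sum_distrib_left mult_ac)
    also have "\<dots> = (\<Sum>j<bnd f e h. ?t (Suc j) m e h)"
    proof -
      have "\<forall>m. du mu (Suc (bnd f e h)) f m e h = 0"
        using du_zero_beyond[OF v, where i="Suc (bnd f e h)" and e=e and h=h] by simp
      then have "?t (Suc (bnd f e h)) m e h = 0"
        using dx_pow_zero[of "du mu (Suc (bnd f e h)) f" e h "Suc (bnd f e h)" m] by simp
      then show ?thesis by (simp add: lessThan_Suc_atMost[symmetric])
    qed
    also have "\<dots> = vard mu f m e h - du mu 0 f m e h"
      unfolding vard_eq[OF v] by (simp add: sum.atMost_shift)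
    finally show ?thesis by simp
  qed
  show ?thesis unfolding lf_eq_def
    by (intro exI[of _ ?K] exI[of _ "\<lambda>m e h. 0"] conjI Kv) (use eq in auto)
qed



lemma fixmom_zero_mode: "fixmom 0 (zero_mode A)"
  unfolding fixmom_def zero_mode_def by auto

lemma fourier_vard_Dy:
  assumes v: "qdp_valid N f" and mq: "momentum Q = momentum P"
  shows "fourier (vard mu f) Q e h = Dy (mu, - momentum P) (zero_mode (fourier f)) Q e h"
proof -
  have m0: "momentum (Q + Poly_Mapping.single (mu, - momentum P) 1) = 0"
    using mq by (simp only: momentum_add momentum_single snd_conv)
  show ?thesis
    unfolding fourier_vard[OF v] Dy_def zero_mode_def mq using m0 by simp
qed

lemma comm_vard:
  assumes va1: "qdp_valid N f1" and vb: "qdp_valid N f2"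
    and comm: "qcomm N etainv (zero_mode (fourier f1)) (zero_mode (fourier f2)) = (\<lambda>P e h. 0)"
  shows "qcomm N etainv (fourier (vard 1 f1)) (zero_mode (fourier f2)) =
         qcomm N etainv (fourier (vard 1 f2)) (zero_mode (fourier f1))"
proof (intro ext)
  fix P e h
  let ?Za = "zero_mode (fourier f1)"
  let ?Zb = "zero_mode (fourier f2)"
  let ?y = "(1::nat, - momentum P)"
  have fa0: "fixmom 0 ?Za" and fb0: "fixmom 0 ?Zb" by (rule fixmom_zero_mode)+
  have la: "\<forall>Q e h. momentum Q = momentum P \<longrightarrow> fourier (vard 1 f1) Q e h = Dy ?y ?Za Q e h"
    using fourier_vard_Dy[OF va1] by blast
  have lb: "\<forall>Q e h. momentum Q = momentum P \<longrightarrow> fourier (vard 1 f2) Q e h = Dy ?y ?Zb Q e h"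
    using fourier_vard_Dy[OF vb] by blast
  have L: "qcomm N etainv (fourier (vard 1 f1)) ?Zb P e h = star N etainv (Dy ?y ?Za) ?Zb P e h - star N etainv ?Zb (Dy ?y ?Za) P e h"
    unfolding qcomm_def using star_local_left[OF fb0 la] star_local_right[OF fb0 la] by simp
  have R: "qcomm N etainv (fourier (vard 1 f2)) ?Za P e h = star N etainv (Dy ?y ?Zb) ?Za P e h - star N etainv ?Za (Dy ?y ?Zb) P e h"
    unfolding qcomm_def using star_local_left[OF fa0 lb] star_local_right[OF fa0 lb] by simp
  have "star N etainv ?Za ?Zb Q e' h' = star N etainv ?Zb ?Za Q e' h'" for Q e' h'
    using fun_cong[OF fun_cong[OF fun_cong[OF comm, of Q], of e'], of h'] unfolding qcomm_def by simp
  then have eqD: "Dy ?y (star N etainv ?Za ?Zb) P e h = Dy ?y (star N etainv ?Zb ?Za) P e h"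
    unfolding Dy_def by simp
  have l1: "Dy ?y (star N etainv ?Za ?Zb) P e h = star N etainv (Dy ?y ?Za) ?Zb P e h + star N etainv ?Za (Dy ?y ?Zb) P e h"
    by (rule star_leibniz[OF fa0])
  have l2: "Dy ?y (star N etainv ?Zb ?Za) P e h = star N etainv (Dy ?y ?Zb) ?Za P e h + star N etainv ?Zb (Dy ?y ?Za) P e h"
    by (rule star_leibniz[OF fb0])
  show "qcomm N etainv (fourier (vard 1 f1)) ?Zb P e h = qcomm N etainv (fourier (vard 1 f2)) ?Za P e h"
    unfolding L R using eqD l1 l2 by (simp add: algebra_simps)
qed

theorem proposition4p2:
  fixes N :: nat
    and eta etainv :: "nat \<Rightarrow> nat \<Rightarrow> complex"
    and hb :: "nat \<Rightarrow> nat \<Rightarrow> qdp"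
  assumes N1: "1 \<le> N"
    and eta_sym: "\<forall>a\<in>{1..N}. \<forall>b\<in>{1..N}. eta a b = eta b a"
    and eta_inv: "\<forall>a\<in>{1..N}. \<forall>b\<in>{1..N}.
                    (\<Sum>mu\<in>{1..N}. eta a mu * etainv mu b) = (if a = b then 1 else 0)"
    and hb_valid: "\<forall>b\<in>{1..N}. \<forall>q. qdp_valid N (hb b q) \<and> deg_le0 (hb b q)"
    and hb_comm: "\<forall>b\<in>{1..N}. \<forall>g\<in>{1..N}. \<forall>q p.
                    qcomm N etainv (zero_mode (fourier (hb b q))) (zero_mode (fourier (hb g p))) =
                    (\<lambda>P e h. 0)"
    and hb_10: "lf_eq N (hb 1 0) (quad_dens N eta)"
    and string_pos: "\<forall>b\<in>{1..N}. \<forall>q\<ge>1. lf_eq N (du 1 0 (hb b q)) (hb b (q - 1))"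
    and string_0: "\<forall>b\<in>{1..N}. lf_eq N (du 1 0 (hb b 0)) (lin_dens N eta b)"
  shows "tau_structure N eta etainv hb (\<lambda>b q. vard 1 (hb b (nat (q + 1))))"

proof -
  let ?H = "\<lambda>b q. vard 1 (hb b (nat (q + 1)))"
  have v: "qdp_valid N (hb b q)" "deg_le0 (hb b q)" if "b \<in> {1..N}" for b q
    using hb_valid that by blast+
  show ?thesis
    unfolding tau_structure_def
  proof (intro conjI ballI allI impI)
    fix b :: nat and q :: int assume b: "b \<in> {1..N}" and "q \<ge> -1"
    show "qdp_valid N (?H b q)" by (rule vard_valid[OF v(1)[OF b]])
    show "deg_le0 (?H b q)" by (rule vard_deg[OF v(1)[OF b] v(2)[OF b]])
  next
    fix b :: nat assume b: "b \<in> {1..N}"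
    have "lf_eq N (vard 1 (hb b 0)) (du 1 0 (hb b 0))" by (rule vard_lf[OF v(1)[OF b]])
    moreover have "lf_eq N (du 1 0 (hb b 0)) (lin_dens N eta b)" using string_0 b by blast
    ultimately show "lf_eq N (?H b (-1)) (lin_dens N eta b)" by (simp add: lf_eq_trans)
  next
    fix b :: nat and q :: nat assume b: "b \<in> {1..N}"
    have "lf_eq N (vard 1 (hb b (Suc q))) (du 1 0 (hb b (Suc q)))" by (rule vard_lf[OF v(1)[OF b]])
    moreover have "lf_eq N (du 1 0 (hb b (Suc q))) (hb b (Suc q - 1))"
    proof -
      have sp: "\<forall>q'\<ge>1. lf_eq N (du 1 0 (hb b q')) (hb b (q' - 1))" using string_pos b by blast
      show ?thesis by (rule sp[rule_format]) simp
    qed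
    ultimately have "lf_eq N (vard 1 (hb b (Suc q))) (hb b q)" using lf_eq_trans by simp
    moreover have "nat (int q + 1) = Suc q" by simp
    ultimately show "lf_eq N (?H b (int q)) (hb b q)" by simp
  next
    fix al b :: nat and p q :: nat assume al: "al \<in> {1..N}" and b: "b \<in> {1..N}"
    have np: "nat (int p - 1 + 1) = p" and nq: "nat (int q - 1 + 1) = q" by simp_all
    have comm: "qcomm N etainv (zero_mode (fourier (hb al p))) (zero_mode (fourier (hb b q))) = (\<lambda>P e h. 0)"
      using hb_comm al b by blast
    show "qcomm N etainv (fourier (?H al (int p - 1))) (zero_mode (fourier (hb b q))) =
          qcomm N etainv (fourier (?H b (int q - 1))) (zero_mode (fourier (hb al p)))"
      unfolding np nq by (rule comm_vard[OF v(1)[OF al] v(1)[OF b] comm])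
  qed
qed


end
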